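(* Let $M$ be a von Neumann algebra and let $a\in M$, $0\le a\le 1$, be strict. Then: (i) $r(1-a)=1$; (ii) if $b\in M$ with $0\le b\le 1$ is absolutely compatible with $a$ and $ab=ba$, then $b$ is a projection; (iii) if $b\in M$ with $0\le b\le 1$ is strict and $a$ is absolutely compatible with $b$, then $ab\neq ba$; (iv) if $x\in M$ satisfies $x^*a^2x=x^*x$, then $x=0$.
   Context: For $x$ in a C$^*$-algebra, $|x|=(x^*x)^{1/2}$. Elements $0\le a,b\le 1$ of a unital C$^*$-algebra are absolutely compatible if $|a-b|+|1-a-b|=1$. For a positive element $x$ of a von Neumann algebra $M$, $r(x)$ denotes its range projection (smallest projection $p$ with $px=x$). For $0\le a\le 1$ in $M$, the support projection is $s(a)=1-r(1-a)$ (equivalently the largest projection $p$ with $pa=p$), and $n(a)=1-r(a)$. A non-zero element $0\le a\le 1$ of $M$ is called strict if $s(a)=0=n(a)$. *)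

theory Defs
  imports Complex_Main
begin

text \<open>Complex Hilbert spaces (inner product conjugate-linear in the first argument, complete).\<close>
class chilbert = ab_group_add +
  fixes scaleC :: "complex \<Rightarrow> 'a \<Rightarrow> 'a"
    and cinner :: "'a \<Rightarrow> 'a \<Rightarrow> complex"
  assumes scaleC_add_right: "scaleC c (x + y) = scaleC c x + scaleC c y"
    and scaleC_add_left: "scaleC (c + d) x = scaleC c x + scaleC d x"
    and scaleC_scaleC: "scaleC c (scaleC d x) = scaleC (c * d) x"
    and scaleC_one: "scaleC 1 x = x"
    and cinner_commute: "cinner x y = cnj (cinner y x)"
    and cinner_add_right: "cinner x (y + z) = cinner x y + cinner x z"
    and cinner_scaleC_right: "cinner x (scaleC c y) = c * cinner x y"
    and cinner_self_nonneg: "Im (cinner x x) = 0 \<and> 0 \<le> Re (cinner x x)"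
    and cinner_self_eq_zero: "cinner x x = 0 \<longleftrightarrow> x = 0"
    and complete: "(\<forall>e>0. \<exists>N::nat. \<forall>m\<ge>N. \<forall>n\<ge>N. sqrt (Re (cinner (X m - X n) (X m - X n))) < e)
       \<Longrightarrow> (\<exists>L. \<forall>e>0. \<exists>N::nat. \<forall>n\<ge>N. sqrt (Re (cinner (X n - L) (X n - L))) < e)"

definition cnorm :: "'a::chilbert \<Rightarrow> real" where
  "cnorm x = sqrt (Re (cinner x x))"

definition bounded_op :: "('a::chilbert \<Rightarrow> 'a) \<Rightarrow> bool" where
  "bounded_op T \<longleftrightarrow> (\<forall>x y. T (x + y) = T x + T y) \<and> (\<forall>c x. T (scaleC c x) = scaleC c (T x))
     \<and> (\<exists>K. \<forall>x. cnorm (T x) \<le> K * cnorm x)"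

definition adj :: "('a::chilbert \<Rightarrow> 'a) \<Rightarrow> ('a \<Rightarrow> 'a)" where
  "adj T = (THE S. \<forall>x y. cinner (T x) y = cinner x (S y))"

definition op_zero :: "'a::chilbert \<Rightarrow> 'a" where "op_zero = (\<lambda>_. 0)"
definition op_add :: "('a::chilbert \<Rightarrow> 'a) \<Rightarrow> ('a \<Rightarrow> 'a) \<Rightarrow> ('a \<Rightarrow> 'a)" where
  "op_add A B = (\<lambda>x. A x + B x)"
definition op_sub :: "('a::chilbert \<Rightarrow> 'a) \<Rightarrow> ('a \<Rightarrow> 'a) \<Rightarrow> ('a \<Rightarrow> 'a)" where
  "op_sub A B = (\<lambda>x. A x - B x)"

definition commutant :: "('a::chilbert \<Rightarrow> 'a) set \<Rightarrow> ('a \<Rightarrow> 'a) set" where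
  "commutant S = {T. bounded_op T \<and> (\<forall>A\<in>S. T \<circ> A = A \<circ> T)}"

definition von_neumann_algebra :: "('a::chilbert \<Rightarrow> 'a) set \<Rightarrow> bool" where
  "von_neumann_algebra M \<longleftrightarrow> M \<subseteq> {T. bounded_op T} \<and> (\<forall>T\<in>M. adj T \<in> M)
     \<and> commutant (commutant M) = M"

definition positive_op :: "('a::chilbert \<Rightarrow> 'a) \<Rightarrow> bool" where
  "positive_op T \<longleftrightarrow> (\<forall>x. Im (cinner x (T x)) = 0 \<and> 0 \<le> Re (cinner x (T x)))"

definition op_le :: "('a::chilbert \<Rightarrow> 'a) \<Rightarrow> ('a \<Rightarrow> 'a) \<Rightarrow> bool" where
  "op_le A B \<longleftrightarrow> positive_op (op_sub B A)"

definition abs_op :: "('a::chilbert \<Rightarrow> 'a) \<Rightarrow> ('a \<Rightarrow> 'a)" where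
  "abs_op x = (THE y. bounded_op y \<and> positive_op y \<and> y \<circ> y = adj x \<circ> x)"

definition is_proj :: "('a::chilbert \<Rightarrow> 'a) \<Rightarrow> bool" where
  "is_proj p \<longleftrightarrow> p \<circ> p = p \<and> adj p = p"

definition range_proj :: "('a::chilbert \<Rightarrow> 'a) set \<Rightarrow> ('a \<Rightarrow> 'a) \<Rightarrow> ('a \<Rightarrow> 'a)" where
  "range_proj M x = (THE p. p \<in> M \<and> is_proj p \<and> p \<circ> x = x
      \<and> (\<forall>q\<in>M. is_proj q \<and> q \<circ> x = x \<longrightarrow> op_le p q))"

definition supp_proj :: "('a::chilbert \<Rightarrow> 'a) set \<Rightarrow> ('a \<Rightarrow> 'a) \<Rightarrow> ('a \<Rightarrow> 'a)" where
  "supp_proj M a = op_sub id (range_proj M (op_sub id a))"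

definition null_proj :: "('a::chilbert \<Rightarrow> 'a) set \<Rightarrow> ('a \<Rightarrow> 'a) \<Rightarrow> ('a \<Rightarrow> 'a)" where
  "null_proj M a = op_sub id (range_proj M a)"

definition effect :: "('a::chilbert \<Rightarrow> 'a) \<Rightarrow> bool" where
  "effect a \<longleftrightarrow> positive_op a \<and> op_le a id"

definition abs_compatible :: "('a::chilbert \<Rightarrow> 'a) \<Rightarrow> ('a \<Rightarrow> 'a) \<Rightarrow> bool" where
  "abs_compatible a b \<longleftrightarrow>
     op_add (abs_op (op_sub a b)) (abs_op (op_sub (op_sub id a) b)) = id"

definition strict :: "('a::chilbert \<Rightarrow> 'a) set \<Rightarrow> ('a \<Rightarrow> 'a) \<Rightarrow> bool" where
  "strict M a \<longleftrightarrow> effect a \<and> a \<noteq> op_zero \<and> supp_proj M a = op_zero \<and> null_proj M a = op_zero"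

end

theory Submission
  imports Defs
begin
interpretation cm: module "scaleC :: complex \<Rightarrow> 'a::chilbert \<Rightarrow> 'a"
  by standard (simp_all add: scaleC_add_right scaleC_add_left scaleC_scaleC scaleC_one)

context chilbert begin
end

lemma cinner_add_left: "cinner (x + y) (z::'a::chilbert) = cinner x z + cinner y z"
proof -
  have "cinner (x + y) z = cnj (cinner z (x + y))" by (rule cinner_commute)
  also have "\<dots> = cnj (cinner z x) + cnj (cinner z y)" by (simp add: cinner_add_right)
  also have "\<dots> = cinner x z + cinner y z" by (simp add: cinner_commute[of x z] cinner_commute[of y z])
  finally show ?thesis .
qed

lemma cinner_scaleC_left: "cinner (scaleC c x) (y::'a::chilbert) = cnj c * cinner x y"
proof -
  have "cinner (scaleC c x) y = cnj (cinner y (scaleC c x))" by (rule cinner_commute)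
  also have "\<dots> = cnj c * cnj (cinner y x)" by (simp add: cinner_scaleC_right)
  also have "\<dots> = cnj c * cinner x y" by (simp add: cinner_commute[of x y])
  finally show ?thesis .
qed

lemma cinner_zero_right[simp]: "cinner x (0::'a::chilbert) = 0"
proof -
  have "cinner x (0::'a) = cinner x (scaleC 0 0)" by simp
  also have "\<dots> = 0" by (simp only: cinner_scaleC_right mult_zero_left)
  finally show ?thesis .
qed

lemma cinner_zero_left[simp]: "cinner (0::'a::chilbert) x = 0"
  by (simp add: cinner_commute[of 0 x])

lemma cinner_minus_right: "cinner x (- y::'a::chilbert) = - cinner x y"
proof -
  have "cinner x (- y) + cinner x y = 0" by (simp flip: cinner_add_right)
  then show ?thesis by (simp add: eq_neg_iff_add_eq_0)
qed

lemma cinner_minus_left: "cinner (- x) (y::'a::chilbert) = - cinner x y"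
proof -
  have "cinner (- x) y + cinner x y = 0" by (simp flip: cinner_add_left)
  then show ?thesis by (simp add: eq_neg_iff_add_eq_0)
qed

lemma cinner_diff_right: "cinner x (y - z::'a::chilbert) = cinner x y - cinner x z"
  by (simp only: diff_conv_add_uminus cinner_add_right cinner_minus_right)

lemma cinner_diff_left: "cinner (x - y) (z::'a::chilbert) = cinner x z - cinner y z"
  by (simp only: diff_conv_add_uminus cinner_add_left cinner_minus_left)

lemmas cinner_simps = cinner_add_left cinner_add_right cinner_diff_left cinner_diff_right
  cinner_minus_left cinner_minus_right cinner_scaleC_left cinner_scaleC_right

lemma cinner_self_real: "cinner x (x::'a::chilbert) = complex_of_real (Re (cinner x x))"
  using cinner_self_nonneg[of x] by (simp add: complex_eq_iff)

lemma cinner_self_ge0: "0 \<le> Re (cinner x (x::'a::chilbert))"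
  using cinner_self_nonneg by blast

lemma cinner_self_Im: "Im (cinner x (x::'a::chilbert)) = 0"
  using cinner_self_nonneg by blast

lemma cnorm_sq: "cnorm x ^ 2 = Re (cinner x (x::'a::chilbert))"
  by (simp add: cnorm_def cinner_self_ge0)

lemma cnorm_ge0: "0 \<le> cnorm (x::'a::chilbert)"
  by (simp add: cnorm_def cinner_self_ge0)

lemma cnorm_zero_iff: "cnorm (x::'a::chilbert) = 0 \<longleftrightarrow> x = 0"
proof -
  have "cnorm x = 0 \<longleftrightarrow> Re (cinner x x) = 0" by (simp add: cnorm_def)
  also have "\<dots> \<longleftrightarrow> cinner x x = 0" using cinner_self_real[of x] by (auto simp: complex_eq_iff)
  finally show ?thesis using cinner_self_eq_zero by blast
qed

lemma cnorm_zero[simp]: "cnorm (0::'a::chilbert) = 0"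
  using cnorm_zero_iff by blast


lemma real_quad_lemma:
  fixes A K C :: real
  assumes "\<And>s. 0 \<le> A - 2 * s * K + s^2 * K * C" "0 \<le> K" "0 \<le> C" "0 \<le> A"
  shows "K \<le> A * C"
proof (cases "C = 0")
  case True
  show ?thesis
  proof (rule ccontr)
    assume "\<not> K \<le> A * C"
    then have K: "K > 0" using True by simp
    have "0 \<le> A - 2 * ((A+1)/K) * K" using assms(1)[of "(A+1)/K"] True by simp
    also have "\<dots> = A - 2 * (A + 1)" using K by simp
    finally show False using assms(4) by simp
  qed
next
  case False
  then have C: "C > 0" using assms by simp
  have "0 \<le> A - 2 * (1/C) * K + (1/C)^2 * K * C" using assms(1) by blast
  also have "\<dots> = A - K / C" using C by (simp add: power2_eq_square field_simps)
  finally show ?thesis using C by (simp add: field_simps)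
qed

lemma sesq_CS:
  fixes B :: "'a::chilbert \<Rightarrow> 'a \<Rightarrow> complex"
  assumes add: "\<And>x y z. B x (y + z) = B x y + B x z"
    and sc: "\<And>x y c. B x (scaleC c y) = c * B x y"
    and herm: "\<And>x y. B y x = cnj (B x y)"
    and pos: "\<And>x. 0 \<le> Re (B x x)"
  shows "(cmod (B x y))^2 \<le> Re (B x x) * Re (B y y)"
proof -
  have addl: "B (x + y) z = B x z + B y z" for x y z
    by (metis add complex_cnj_add herm)
  have scl: "B (scaleC c x) y = cnj c * B x y" for c x y
    by (metis complex_cnj_mult herm sc)
  have real: "B v v = complex_of_real (Re (B v v))" for v
    by (metis herm Reals_cnj_iff of_real_Re)
  have diffr: "B u (v - w) = B u v - B u w" for u v w
    by (metis add add_diff_cancel_right' diff_add_cancel)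
  have diffl: "B (v - w) u = B v u - B w u" for u v w
    by (metis addl add_diff_cancel_right' diff_add_cancel)
  define \<beta> where "\<beta> = B x y"
  define K where "K = (cmod \<beta>)^2"
  have bb: "\<beta> * cnj \<beta> = complex_of_real K" unfolding K_def by (metis complex_norm_square of_real_power)
  have q: "0 \<le> Re (B x x) - 2 * s * K + s^2 * K * Re (B y y)" for s :: real
  proof -
    define t where "t = complex_of_real s * cnj \<beta>"
    have e1: "B (x - scaleC t y) (x - scaleC t y) = B x x - t * B x y - cnj t * B y x + cnj t * t * B y y"
      by (simp only: diffr diffl sc scl) (simp add: algebra_simps)
    have e2: "t * B x y = complex_of_real (s * K)" unfolding t_def \<beta>_def[symmetric]
      using bb by (simp add: mult.commute mult.left_commute)
    have e3: "cnj t * B y x = complex_of_real (s * K)" unfolding t_def herm[of y x] \<beta>_def[symmetric]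
      using bb by (simp add: mult.commute mult.left_commute)
    have e4: "cnj t * t = complex_of_real (s^2 * K)" unfolding t_def
      using bb by (simp add: power2_eq_square mult.commute mult.left_commute)
    have "B (x - scaleC t y) (x - scaleC t y)
        = complex_of_real (Re (B x x) - 2 * s * K + s^2 * K * Re (B y y))"
      unfolding e1 e2 e3 e4 by (subst real[of x], subst real[of y]) simp
    then show ?thesis using pos by (metis Re_complex_of_real)
  qed
  show ?thesis using real_quad_lemma[OF q] pos unfolding K_def \<beta>_def by simp
qed

lemma CS: "(cmod (cinner x y))^2 \<le> Re (cinner x x) * Re (cinner y (y::'a::chilbert))"
  by (rule sesq_CS) (auto simp: cinner_add_right cinner_scaleC_right cinner_self_ge0
      intro: cinner_commute)

lemma CS_norm: "cmod (cinner x y) \<le> cnorm x * cnorm (y::'a::chilbert)"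
proof -
  have "(cmod (cinner x y))^2 \<le> (cnorm x * cnorm y)^2"
    using CS[of x y] by (simp add: power_mult_distrib cnorm_sq)
  then show ?thesis by (meson cnorm_ge0 mult_nonneg_nonneg power2_le_imp_le)
qed

lemma Re_cinner_swap: "Re (cinner y x) = Re (cinner x (y::'a::chilbert))"
  by (subst cinner_commute) simp

lemma nsq_add: "Re (cinner (x + y) (x + y)) = Re (cinner x x) + 2 * Re (cinner x y) + Re (cinner y (y::'a::chilbert))"
  by (simp add: cinner_add_left cinner_add_right Re_cinner_swap[of y x])

lemma nsq_diff: "Re (cinner (x - y) (x - y)) = Re (cinner x x) - 2 * Re (cinner x y) + Re (cinner y (y::'a::chilbert))"
  by (simp add: cinner_diff_left cinner_diff_right Re_cinner_swap[of y x])

lemma parallelogram: "Re (cinner (x + y) (x + y)) + Re (cinner (x - y) (x - y)) = 2 * Re (cinner x x) + 2 * Re (cinner y (y::'a::chilbert))"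
  by (simp add: nsq_add nsq_diff)

lemma nsq_scaleC: "Re (cinner (scaleC c x) (scaleC c x)) = (cmod c)^2 * Re (cinner x (x::'a::chilbert))"
proof -
  have "cinner (scaleC c x) (scaleC c x) = (cnj c * c) * cinner x x" by (simp add: cinner_scaleC_left cinner_scaleC_right)
  also have "cnj c * c = complex_of_real ((cmod c)^2)" by (metis complex_norm_square mult.commute of_real_power)
  finally show ?thesis by simp
qed

lemma cnorm_scaleC: "cnorm (scaleC c x) = cmod c * cnorm (x::'a::chilbert)"
  unfolding cnorm_def nsq_scaleC by (simp add: real_sqrt_mult)

lemma cnorm_minus: "cnorm (- x) = cnorm (x::'a::chilbert)"
  unfolding cnorm_def by (simp add: cinner_minus_left cinner_minus_right)

lemma cnorm_minus_commute: "cnorm (x - y) = cnorm (y - (x::'a::chilbert))"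
  by (metis cnorm_minus minus_diff_eq)

lemma cnorm_triangle: "cnorm (x + y) \<le> cnorm x + cnorm (y::'a::chilbert)"
proof -
  have "Re (cinner x y) \<le> cnorm x * cnorm y"
    using CS_norm[of x y] complex_Re_le_cmod order_trans by blast
  then have "(cnorm (x + y))^2 \<le> (cnorm x + cnorm y)^2"
    by (simp add: cnorm_sq nsq_add power2_sum)
  then show ?thesis using cnorm_ge0 by (meson add_nonneg_nonneg power2_le_imp_le)
qed

lemma cnorm_triangle_diff: "cnorm (x - z) \<le> cnorm (x - y) + cnorm (y - (z::'a::chilbert))"
  by (metis cnorm_triangle diff_add_cancel add_diff_eq diff_diff_eq2)

lemma cnorm_rev_triangle: "\<bar>cnorm x - cnorm y\<bar> \<le> cnorm (x - (y::'a::chilbert))"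
proof -
  have "cnorm x \<le> cnorm (x - y) + cnorm y" by (metis cnorm_triangle diff_add_cancel)
  moreover have "cnorm y \<le> cnorm (x - y) + cnorm x"
    by (metis cnorm_triangle diff_add_cancel cnorm_minus_commute)
  ultimately show ?thesis by linarith
qed

definition conv :: "(nat \<Rightarrow> 'a::chilbert) \<Rightarrow> 'a \<Rightarrow> bool" where
  "conv X L \<longleftrightarrow> (\<lambda>n. cnorm (X n - L)) \<longlonglongrightarrow> 0"

lemma complete_conv:
  fixes X :: "nat \<Rightarrow> 'a::chilbert"
  assumes "\<And>e. e > 0 \<Longrightarrow> \<exists>N. \<forall>m\<ge>N. \<forall>n\<ge>N. cnorm (X m - X n) < e"
  shows "\<exists>L. conv X L"
proof -
  from complete[of X] assms obtain L where L: "\<forall>e>0. \<exists>N::nat. \<forall>n\<ge>N. cnorm (X n - L) < e"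
    unfolding cnorm_def by blast
  have "(\<lambda>n. cnorm (X n - L)) \<longlonglongrightarrow> 0"
    unfolding lim_sequentially dist_real_def using L by (simp add: abs_of_nonneg[OF cnorm_ge0])
  then show ?thesis unfolding conv_def by blast
qed

lemma conv_cinner: assumes "conv X L" shows "(\<lambda>n. cinner w (X n)) \<longlonglongrightarrow> cinner w (L::'a::chilbert)"
proof -
  have "(\<lambda>n. cnorm w * cnorm (X n - L)) \<longlonglongrightarrow> cnorm w * 0"
    using assms unfolding conv_def by (intro tendsto_intros)
  then have "(\<lambda>n. cnorm w * cnorm (X n - L)) \<longlonglongrightarrow> 0" by simp
  moreover have "norm (cinner w (X n) - cinner w L) \<le> cnorm w * cnorm (X n - L)" for n
    using CS_norm[of w "X n - L"] by (simp add: cinner_diff_right)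
  ultimately show ?thesis
    by (subst LIM_zero_iff[symmetric]) (rule tendsto_0_le[where K=1],
       auto intro!: always_eventually simp: abs_of_nonneg cnorm_ge0)
qed

lemma conv_cnorm: assumes "conv X L" shows "(\<lambda>n. cnorm (X n)) \<longlonglongrightarrow> cnorm (L::'a::chilbert)"
proof -
  have "\<bar>cnorm (X n) - cnorm L\<bar> \<le> cnorm (X n - L)" for n by (rule cnorm_rev_triangle)
  then show ?thesis using assms unfolding conv_def
    by (subst LIM_zero_iff[symmetric]) (rule tendsto_0_le[where K=1],
       auto intro!: always_eventually simp: abs_of_nonneg cnorm_ge0)
qed

lemma conv_unique: assumes "conv X L" "conv X L'" shows "L = (L'::'a::chilbert)"
proof -
  have "cnorm (L - L') \<le> cnorm (X n - L) + cnorm (X n - L')" for n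
    by (metis cnorm_triangle_diff cnorm_minus_commute)
  moreover have "(\<lambda>n. cnorm (X n - L) + cnorm (X n - L')) \<longlonglongrightarrow> 0 + 0"
    using assms unfolding conv_def by (intro tendsto_intros)
  ultimately have "cnorm (L - L') \<le> 0"
    by (intro LIMSEQ_le[OF tendsto_const]) auto
  then show ?thesis using cnorm_ge0 cnorm_zero_iff by (metis antisym eq_iff_diff_eq_0)
qed

definition csub :: "'a::chilbert set \<Rightarrow> bool" where
  "csub K \<longleftrightarrow> 0 \<in> K \<and> (\<forall>x\<in>K. \<forall>y\<in>K. x + y \<in> K) \<and> (\<forall>c. \<forall>x\<in>K. scaleC c x \<in> K)"

definition cclosed :: "'a::chilbert set \<Rightarrow> bool" where
  "cclosed K \<longleftrightarrow> (\<forall>X L. (\<forall>n. X n \<in> K) \<and> conv X L \<longrightarrow> L \<in> K)"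

lemma nsq_expand:
  fixes u w :: "'a::chilbert"
  defines "\<gamma> \<equiv> cinner w u"
  shows "Re (cinner (u - scaleC (complex_of_real s * \<gamma>) w) (u - scaleC (complex_of_real s * \<gamma>) w))
     = Re (cinner u u) - 2 * s * (cmod \<gamma>)^2 + s^2 * (cmod \<gamma>)^2 * Re (cinner w w)"
proof -
  define t where "t = complex_of_real s * \<gamma>"
  have bb: "\<gamma> * cnj \<gamma> = complex_of_real ((cmod \<gamma>)^2)" by (metis complex_norm_square of_real_power)
  have e1: "cinner (u - scaleC t w) (u - scaleC t w) = cinner u u - t * cinner u w - cnj t * cinner w u + cnj t * t * cinner w w"
    by (simp only: cinner_diff_left cinner_diff_right cinner_scaleC_left cinner_scaleC_right) (simp add: algebra_simps)
  have e2: "t * cinner u w = complex_of_real (s * (cmod \<gamma>)^2)" unfolding t_def cinner_commute[of u w] \<gamma>_def[symmetric]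
    using bb by (simp add: mult.commute mult.left_commute)
  have e3: "cnj t * cinner w u = complex_of_real (s * (cmod \<gamma>)^2)" unfolding t_def \<gamma>_def[symmetric]
    using bb by (simp add: mult.commute mult.left_commute)
  have e4: "cnj t * t = complex_of_real (s^2 * (cmod \<gamma>)^2)" unfolding t_def
    using bb by (simp add: power2_eq_square mult.commute mult.left_commute)
  show ?thesis unfolding t_def[symmetric] e1 e2 e3 e4
    by (subst cinner_self_real[of u], subst cinner_self_real[of w]) simp
qed

lemma proj_exists:
  fixes K :: "'a::chilbert set"
  assumes sub: "csub K" and cl: "cclosed K"
  shows "\<exists>k\<in>K. \<forall>w\<in>K. cinner w (v - k) = 0"
proof -
  define f where "f k = Re (cinner (v - k) (v - k))" for k
  define D where "D = Inf (f ` K)"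
  have K0: "0 \<in> K" using sub csub_def by blast
  have bdd: "bdd_below (f ` K)" unfolding f_def by (rule bdd_belowI[of _ 0]) (auto simp: cinner_self_ge0)
  have Dle: "D \<le> f k" if "k \<in> K" for k unfolding D_def using bdd that by (simp add: cInf_lower)
  have "\<exists>k\<in>K. f k < D + 1 / real (Suc n)" for n
  proof -
    have "Inf (f ` K) < D + 1 / real (Suc n)" unfolding D_def by simp
    then show ?thesis using K0 by (subst (asm) cInf_less_iff) (auto simp: bdd)
  qed
  then obtain ks where ks: "\<And>n. ks n \<in> K" "\<And>n. f (ks n) < D + 1 / real (Suc n)" by metis
  have mid: "scaleC (1/2) (x + y) \<in> K" if "x \<in> K" "y \<in> K" for x y
    using sub that unfolding csub_def by blast
  have diffK: "x - y \<in> K" if "x \<in> K" "y \<in> K" for x y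
  proof -
    have "scaleC (-1) y \<in> K" using sub that unfolding csub_def by blast
    then have "x + scaleC (-1) y \<in> K" using sub that unfolding csub_def by blast
    then show ?thesis by simp
  qed
  have addK: "x + y \<in> K" if "x \<in> K" "y \<in> K" for x y using sub that unfolding csub_def by blast
  have scK: "scaleC c x \<in> K" if "x \<in> K" for x c using sub that unfolding csub_def by blast
  have par: "Re (cinner (ks m - ks n) (ks m - ks n)) \<le> 2 / real (Suc n) + 2 / real (Suc m)" for m n
  proof -
    define x where "x = v - ks n"
    define y where "y = v - ks m"
    have xy: "x + y = scaleC 2 (v - scaleC (1/2) (ks n + ks m))"
      unfolding x_def y_def by (simp add: cm.scale_right_diff_distrib cm.scale_left_distrib[of 1 1, simplified] algebra_simps)
    have "Re (cinner (x + y) (x + y)) = 4 * f (scaleC (1/2) (ks n + ks m))"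
      unfolding xy nsq_scaleC f_def by simp
    then have "Re (cinner (x + y) (x + y)) \<ge> 4 * D" using Dle[OF mid[OF ks(1) ks(1)]] by simp
    moreover have eq: "x - y = ks m - ks n" unfolding x_def y_def by simp
    moreover note parallelogram[of x y]
    moreover have "Re (cinner x x) < D + 1 / real (Suc n)" "Re (cinner y y) < D + 1 / real (Suc m)"
      using ks(2) unfolding f_def x_def y_def by auto
    ultimately show ?thesis unfolding eq[symmetric] by linarith
  qed
  have "\<exists>N. \<forall>m\<ge>N. \<forall>n\<ge>N. cnorm (ks m - ks n) < e" if e: "e > 0" for e
  proof -
    obtain N :: nat where N: "4 / e^2 < real N" using reals_Archimedean2 by blast
    have "cnorm (ks m - ks n) < e" if "m \<ge> N" "n \<ge> N" for m n
    proof -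
      have "2 / real (Suc n) \<le> 2 / real (Suc N)" "2 / real (Suc m) \<le> 2 / real (Suc N)"
        using that by (auto intro!: divide_left_mono)
      moreover have "4 / real (Suc N) < e^2"
      proof -
        have "4 < real N * e^2" using N e by (simp add: divide_less_eq)
        moreover have "0 < e^2" using e by simp
        moreover have "real (Suc N) * e^2 = real N * e^2 + e^2" by (simp add: algebra_simps)
        ultimately have "4 < e^2 * real (Suc N)" by (simp only: mult.commute[of "e^2"])
        then show ?thesis by (subst pos_divide_less_eq) auto
      qed
      moreover note par[of m n]
      ultimately have "Re (cinner (ks m - ks n) (ks m - ks n)) < e^2" by linarith
      then have "(cnorm (ks m - ks n))^2 < e^2" by (simp only: cnorm_sq)
      then show ?thesis using e power2_less_imp_less by (metis less_le)
    qed
    then show ?thesis by blast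
  qed
  then obtain k where k: "conv ks k" using complete_conv by blast
  have kK: "k \<in> K" using cl k ks(1) unfolding cclosed_def by blast
  have "f k \<le> D"
  proof -
    have c1: "(\<lambda>n. cnorm (v - ks n)) \<longlonglongrightarrow> cnorm (v - k)"
    proof -
      have "conv (\<lambda>n. v - ks n) (v - k)" using k unfolding conv_def
        by (simp add: cnorm_minus_commute algebra_simps)
      then show ?thesis by (rule conv_cnorm)
    qed
    have "(\<lambda>n. (cnorm (v - ks n))^2) \<longlonglongrightarrow> (cnorm (v - k))^2" using c1 by (intro tendsto_intros)
    moreover have "(cnorm (v - ks n))^2 \<le> D + 1 / real (Suc n)" for n using ks(2)[of n]
      unfolding f_def cnorm_sq by simp
    moreover have "(\<lambda>n. D + 1 / real (Suc n)) \<longlonglongrightarrow> D + 0"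
      by (intro tendsto_intros LIMSEQ_Suc[OF lim_inverse_n'] ) 
    ultimately have "(cnorm (v - k))^2 \<le> D" by (intro LIMSEQ_le) auto
    then show ?thesis unfolding f_def cnorm_sq .
  qed
  have "cinner w (v - k) = 0" if w: "w \<in> K" for w
  proof -
    define u where "u = v - k"
    define \<gamma> where "\<gamma> = cinner w u"
    have "0 \<le> 0 - 2 * s * (cmod \<gamma>)^2 + s^2 * (cmod \<gamma>)^2 * Re (cinner w w)" for s
    proof -
      have "k + scaleC (complex_of_real s * \<gamma>) w \<in> K" using addK scK kK w by blast
      then have "D \<le> f (k + scaleC (complex_of_real s * \<gamma>) w)" by (rule Dle)
      also have "f (k + scaleC (complex_of_real s * \<gamma>) w) =
         Re (cinner u u) - 2 * s * (cmod \<gamma>)^2 + s^2 * (cmod \<gamma>)^2 * Re (cinner w w)"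
        unfolding f_def \<gamma>_def u_def nsq_expand[symmetric] by (simp add: algebra_simps)
      finally show ?thesis using \<open>f k \<le> D\<close> unfolding f_def u_def by simp
    qed
    then have "(cmod \<gamma>)^2 \<le> 0 * Re (cinner w w)"
      by (intro real_quad_lemma) (auto simp: cinner_self_ge0)
    then show ?thesis unfolding \<gamma>_def u_def by simp
  qed
  then show ?thesis using kK by blast
qed

definition lin :: "('a::chilbert \<Rightarrow> 'a) \<Rightarrow> bool" where
  "lin T \<longleftrightarrow> (\<forall>x y. T (x + y) = T x + T y) \<and> (\<forall>c x. T (scaleC c x) = scaleC c (T x))"

lemma bounded_lin: "bounded_op T \<Longrightarrow> lin T"
  unfolding bounded_op_def lin_def by blast

lemma lin_add: "lin T \<Longrightarrow> T (x + y) = T x + T y" unfolding lin_def by blast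
lemma lin_scaleC: "lin T \<Longrightarrow> T (scaleC c x) = scaleC c (T x)" unfolding lin_def by blast
lemma lin_zero: "lin T \<Longrightarrow> T 0 = 0"
  by (metis add_cancel_right_right lin_add)
lemma lin_minus: "lin T \<Longrightarrow> T (- x) = - T x"
  by (metis add_eq_0_iff lin_add lin_zero add.right_inverse)
lemma lin_diff: "lin T \<Longrightarrow> T (x - y) = T x - T y"
  by (simp add: diff_conv_add_uminus lin_add lin_minus del: add_uminus_conv_diff)

lemma bounded_bound: "bounded_op T \<Longrightarrow> \<exists>K>0. \<forall>x. cnorm (T x) \<le> K * cnorm x"
proof -
  assume "bounded_op T"
  then obtain K where K: "\<forall>x. cnorm (T x) \<le> K * cnorm x" unfolding bounded_op_def by blast
  have "cnorm (T x) \<le> (max K 1) * cnorm x" for x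
    using K[rule_format, of x] cnorm_ge0[of x] by (smt (verit) mult_right_mono)
  then show ?thesis by (intro exI[of _ "max K 1"]) auto
qed

lemma boundedI: "lin T \<Longrightarrow> (\<And>x. cnorm (T x) \<le> K * cnorm x) \<Longrightarrow> bounded_op T"
  unfolding bounded_op_def lin_def by blast

lemma cinner_eq_zero_right: "(\<And>x. cinner x v = 0) \<Longrightarrow> v = (0::'a::chilbert)"
  using cinner_self_eq_zero by blast

lemma cinner_eq_zero_left: "(\<And>x. cinner v x = 0) \<Longrightarrow> v = (0::'a::chilbert)"
  using cinner_self_eq_zero by blast

lemma vec_eqI: "(\<And>x. cinner x v = cinner x w) \<Longrightarrow> v = (w::'a::chilbert)"
  by (metis cinner_diff_right cinner_eq_zero_right eq_iff_diff_eq_0)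

lemma vec_eqI2: "(\<And>x. cinner v x = cinner w x) \<Longrightarrow> v = (w::'a::chilbert)"
  by (metis cinner_diff_left cinner_eq_zero_left eq_iff_diff_eq_0)

lemma riesz:
  fixes f :: "'a::chilbert \<Rightarrow> complex"
  assumes add: "\<And>x y. f (x + y) = f x + f y" and sc: "\<And>c x. f (scaleC c x) = c * f x"
    and bd: "\<And>x. cmod (f x) \<le> C * cnorm x"
  shows "\<exists>z. \<forall>x. f x = cinner z x"
proof (cases "\<forall>x. f x = 0")
  case True then show ?thesis by (intro exI[of _ 0]) simp
next
  case False
  then obtain v where v: "f v \<noteq> 0" by blast
  define K where "K = {x. f x = 0}"
  have f0: "f 0 = 0" by (metis add add_cancel_right_right)
  have fminus: "f (x - y) = f x - f y" for x y
    by (metis add diff_add_cancel eq_diff_eq)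
  have sub: "csub K" unfolding csub_def K_def using f0 add sc by auto
  have cl: "cclosed K" unfolding cclosed_def
  proof (intro allI impI)
    fix X L assume h: "(\<forall>n. X n \<in> K) \<and> conv X L"
    have "cmod (f L) \<le> C * cnorm (X n - L)" for n
    proof -
      have "f L = - f (X n - L)" using h by (simp add: fminus K_def)
      then show ?thesis using bd[of "X n - L"] by simp
    qed
    moreover have "(\<lambda>n. cnorm (X n - L)) \<longlonglongrightarrow> 0" using h conv_def by blast
    then have "(\<lambda>n. C * cnorm (X n - L)) \<longlonglongrightarrow> C * 0" by (intro tendsto_intros)
    ultimately have "cmod (f L) \<le> C * 0" by (intro LIMSEQ_le[OF tendsto_const]) auto
    then show "L \<in> K" unfolding K_def by simp
  qed
  obtain k where k: "k \<in> K" "\<forall>w\<in>K. cinner w (v - k) = 0" using proj_exists[OF sub cl] by blast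
  define u where "u = v - k"
  have fu: "f u = f v" unfolding u_def using k(1) by (simp add: fminus K_def)
  have u0: "u \<noteq> 0" using fu v f0 by auto
  define N where "N = cinner u u"
  have N0: "N \<noteq> 0" unfolding N_def using u0 cinner_self_eq_zero by blast
  have Nr: "cnj N = N" unfolding N_def by (metis cinner_commute)
  define z where "z = scaleC (cnj (f u) / cnj N) u"
  have "f x = cinner z x" for x
  proof -
    have "x - scaleC (f x / f u) u \<in> K" unfolding K_def using fu v by (simp add: fminus sc)
    then have "cinner (x - scaleC (f x / f u) u) u = 0"
      using k(2) unfolding u_def by (metis cinner_commute complex_cnj_zero)
    then have "cinner x u = cnj (f x / f u) * N" unfolding N_def by (simp add: cinner_diff_left cinner_scaleC_left)
    then have "cinner u x = (f x / f u) * cnj N" by (metis cinner_commute complex_cnj_cnj complex_cnj_mult)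
    then show ?thesis unfolding z_def cinner_scaleC_left using fu v N0 Nr by (simp add: field_simps)
  qed
  then show ?thesis by blast
qed

lemma adj_eqI: "(\<And>x y. cinner (T x) y = cinner x (S y)) \<Longrightarrow> adj T = S"
  unfolding adj_def
proof (rule the_equality)
  assume "\<And>x y. cinner (T x) y = cinner x (S y)"
  then show "\<forall>x y. cinner (T x) y = cinner x (S y)" by blast
next
  fix S' assume h: "\<And>x y. cinner (T x) y = cinner x (S y)" "\<forall>x y. cinner (T x) y = cinner x (S' y)"
  show "S' = S" by (rule ext, rule vec_eqI) (metis h)
qed

lemma adj_exists:
  assumes "bounded_op T" shows "\<exists>S. \<forall>x y. cinner (T x) y = cinner x (S y)"
proof -
  obtain K where K: "K > 0" "\<And>x. cnorm (T x) \<le> K * cnorm x" using bounded_bound[OF assms] by blast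
  have l: "lin T" using assms by (rule bounded_lin)
  have "\<exists>z. \<forall>x. cinner y (T x) = cinner z x" for y
  proof (rule riesz[where C = "cnorm y * K"])
    show "cinner y (T (x1 + x2)) = cinner y (T x1) + cinner y (T x2)" for x1 x2 by (simp add: lin_add[OF l] cinner_add_right)
    show "cinner y (T (scaleC c x)) = c * cinner y (T x)" for c x by (simp add: lin_scaleC[OF l] cinner_scaleC_right)
    show "cmod (cinner y (T x)) \<le> cnorm y * K * cnorm x" for x
      using CS_norm[of y "T x"] K(2)[of x] cnorm_ge0[of y]
      by (smt (verit, ccfv_SIG) mult.assoc mult_left_mono)
  qed
  then obtain S where S: "\<And>y x. cinner y (T x) = cinner (S y) x" by metis
  have "cinner (T x) y = cinner x (S y)" for x y by (metis S cinner_commute)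
  then show ?thesis by blast
qed

lemma adj_spec: "bounded_op T \<Longrightarrow> cinner (T x) y = cinner x (adj T y)"
  by (metis adj_eqI adj_exists)

lemma adj_spec2: "bounded_op T \<Longrightarrow> cinner x (T y) = cinner (adj T x) y"
  by (metis adj_spec cinner_commute)

lemma adj_lin: assumes "bounded_op T" shows "lin (adj T)"
  unfolding lin_def
proof (intro conjI allI)
  show "adj T (x + y) = adj T x + adj T y" for x y
    by (rule vec_eqI) (simp add: adj_spec[OF assms, symmetric] cinner_add_right)
  show "adj T (scaleC c x) = scaleC c (adj T x)" for c x
    by (rule vec_eqI) (simp add: adj_spec[OF assms, symmetric] cinner_scaleC_right)
qed

lemma adj_bounded: assumes "bounded_op T" shows "bounded_op (adj T)"
proof -
  obtain K where K: "K > 0" "\<And>x. cnorm (T x) \<le> K * cnorm x" using bounded_bound[OF assms] by blast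
  have "cnorm (adj T y) \<le> K * cnorm y" for y
  proof -
    have "(cnorm (adj T y))^2 = Re (cinner (T (adj T y)) y)" by (simp add: cnorm_sq adj_spec[OF assms])
    also have "\<dots> \<le> cnorm (T (adj T y)) * cnorm y" using CS_norm complex_Re_le_cmod order_trans by blast
    also have "\<dots> \<le> K * cnorm (adj T y) * cnorm y" using K(2) cnorm_ge0 mult_right_mono by blast
    finally have "cnorm (adj T y) * cnorm (adj T y) \<le> cnorm (adj T y) * (K * cnorm y)"
      by (simp add: power2_eq_square algebra_simps)
    then show ?thesis using cnorm_ge0[of "adj T y"] K cnorm_ge0[of y]
      by (metis mult_le_cancel_left_pos order_le_less mult_nonneg_nonneg less_eq_real_def)
  qed
  then show ?thesis using adj_lin[OF assms] by (rule boundedI[rotated])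
qed

lemma adj_adj: "bounded_op T \<Longrightarrow> adj (adj T) = T"
  by (rule adj_eqI) (metis adj_spec cinner_commute)

lemma adj_comp: "bounded_op A \<Longrightarrow> bounded_op B \<Longrightarrow> adj (A \<circ> B) = adj B \<circ> adj A"
  by (rule adj_eqI) (simp add: adj_spec)

lemma adj_self: "(\<And>x y. cinner (T x) y = cinner x (T y)) \<Longrightarrow> adj T = T"
  by (rule adj_eqI)

lemma polar:
  assumes l: "lin T"
  shows "4 * cinner x (T y) = cinner (x + y) (T (x + y)) - cinner (x - y) (T (x - y))
     - \<i> * (cinner (x + scaleC \<i> y) (T (x + scaleC \<i> y)) - cinner (x - scaleC \<i> y) (T (x - scaleC \<i> y)))"
  by (simp add: lin_add[OF l] lin_diff[OF l] lin_scaleC[OF l] cinner_simps algebra_simps)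

lemma lin_zero_form: assumes l: "lin T" and h: "\<And>v. cinner v (T v) = 0" shows "T = (\<lambda>_. 0)"
proof
  fix y
  have "4 * cinner (T y) (T y) = 0" using polar[OF l, of "T y" y] h by simp
  then have "cinner (T y) (T y) = 0" by simp
  then show "T y = 0" using cinner_self_eq_zero by blast
qed

lemma quad_scale: "lin T \<Longrightarrow> cinner (scaleC c v) (T (scaleC c v)) = (cnj c * c) * cinner v (T v)"
  by (simp add: lin_scaleC cinner_scaleC_left cinner_scaleC_right)

lemma lin_sym:
  assumes l: "lin T" and h: "\<And>v. Im (cinner v (T v)) = 0"
  shows "cinner (T x) y = cinner x (T y)"
proof -
  define q where "q v = cinner v (T v)" for v
  have qr: "cnj (q v) = q v" for v using h[of v] unfolding q_def by (simp add: complex_eq_iff)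
  have qm: "q (- v) = q v" for v unfolding q_def by (simp add: lin_minus[OF l] cinner_minus_left cinner_minus_right)
  have qi: "q (scaleC \<i> v) = q v" for v unfolding q_def quad_scale[OF l] by simp
  have e1: "y + x = x + y" by simp
  have e2: "y - x = - (x - y)" by simp
  have e3: "y + scaleC \<i> x = scaleC \<i> (x - scaleC \<i> y)"
    by (simp add: cm.scale_right_diff_distrib)
  have e4: "y - scaleC \<i> x = - scaleC \<i> (x + scaleC \<i> y)"
    by (simp add: cm.scale_right_distrib)
  define a where "a = q (x + y) - q (x - y)"
  define b where "b = q (x - scaleC \<i> y) - q (x + scaleC \<i> y)"
  have F1: "4 * cinner y (T x) = q (x + y) - q (x - y) - \<i> * (q (x - scaleC \<i> y) - q (x + scaleC \<i> y))"
    using polar[OF l, of y x] unfolding q_def[symmetric] e1 e2 e3 e4 qm qi .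
  have F2: "4 * cinner x (T y) = q (x + y) - q (x - y) - \<i> * (q (x + scaleC \<i> y) - q (x - scaleC \<i> y))"
    using polar[OF l, of x y] unfolding q_def[symmetric] .
  have A: "4 * cinner y (T x) = a - \<i> * b" unfolding F1 a_def b_def by simp
  have B: "4 * cinner x (T y) = a + \<i> * b" unfolding F2 a_def b_def by (simp add: algebra_simps)
  have "cnj a = a" "cnj b = b" unfolding a_def b_def by (simp_all add: qr)
  then have "cnj (4 * cinner x (T y)) = a - \<i> * b" unfolding B by simp
  then have "4 * cinner y (T x) = 4 * cnj (cinner x (T y))" using A by simp
  then have "cinner y (T x) = cnj (cinner x (T y))" by simp
  then show ?thesis by (metis cinner_commute)
qed

lemma mult_cancel_aux: fixes a b :: real shows "0 \<le> a \<Longrightarrow> 0 \<le> b \<Longrightarrow> a * a \<le> a * b \<Longrightarrow> a \<le> b"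
proof (rule ccontr)
  assume "0 \<le> a" "0 \<le> b" "a * a \<le> a * b" "\<not> a \<le> b"
  then have "a * b < a * a" by (intro mult_strict_left_mono) auto
  then show False using \<open>a * a \<le> a * b\<close> by simp
qed

lemma pos_Im: "positive_op T \<Longrightarrow> Im (cinner v (T v)) = 0" unfolding positive_op_def by blast
lemma pos_Re: "positive_op T \<Longrightarrow> 0 \<le> Re (cinner v (T v))" unfolding positive_op_def by blast

lemma pos_sym: "lin T \<Longrightarrow> positive_op T \<Longrightarrow> cinner (T x) y = cinner x (T y)"
  using lin_sym pos_Im by blast

lemma pos_real: "positive_op T \<Longrightarrow> cinner v (T v) = complex_of_real (Re (cinner v (T v)))"
  using pos_Im by (simp add: complex_eq_iff)

lemma sym_real: "(\<And>x y. cinner (T x) y = cinner x (T y)) \<Longrightarrow> Im (cinner v (T v)) = 0"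
  by (metis cinner_commute Reals_cnj_iff complex_is_Real_iff)

lemma pos_CS:
  assumes l: "lin T" and p: "positive_op T"
  shows "(cmod (cinner x (T y)))^2 \<le> Re (cinner x (T x)) * Re (cinner y (T y))"
proof (rule sesq_CS[where B = "\<lambda>x y. cinner x (T y)"])
  show "cinner x (T (y + z)) = cinner x (T y) + cinner x (T z)" for x y z by (simp add: lin_add[OF l] cinner_add_right)
  show "cinner x (T (scaleC c y)) = c * cinner x (T y)" for x y c by (simp add: lin_scaleC[OF l] cinner_scaleC_right)
  show "cinner y (T x) = cnj (cinner x (T y))" for x y by (metis pos_sym[OF l p] cinner_commute)
  show "0 \<le> Re (cinner x (T x))" for x using pos_Re[OF p] .
qed

lemma pos_zero:
  assumes l: "lin T" and p: "positive_op T" and h: "Re (cinner v (T v)) = 0"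
  shows "T v = 0"
proof -
  have "(cmod (cinner (T v) (T v)))^2 \<le> 0" using pos_CS[OF l p, of "T v" v] h by simp
  then have "cinner (T v) (T v) = 0" by simp
  then show ?thesis using cinner_self_eq_zero by blast
qed

lemma sq_le:
  assumes l: "lin Y" and p: "positive_op Y" and le: "\<And>v. Re (cinner v (Y v)) \<le> Re (cinner v v)"
  shows "Re (cinner (Y v) (Y v)) \<le> Re (cinner v (Y v))"
proof -
  define n where "n = Re (cinner (Y v) (Y v))"
  define r where "r = Re (cinner v (Y v))"
  have n0: "0 \<le> n" unfolding n_def by (rule cinner_self_ge0)
  have "cmod (cinner (Y v) (Y v)) = n" unfolding n_def
    by (subst cinner_self_real) (simp add: cinner_self_ge0)
  then have "n^2 \<le> Re (cinner (Y v) (Y (Y v))) * r" using pos_CS[OF l p, of "Y v" v] unfolding r_def by simp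
  also have "\<dots> \<le> n * r" unfolding n_def r_def
    using le[of "Y v"] pos_Re[OF p, of v] by (simp add: mult_right_mono)
  finally have "n * n \<le> n * r" by (simp add: power2_eq_square)
  then show ?thesis using n0 pos_Re[OF p, of v] mult_cancel_aux unfolding n_def[symmetric] r_def[symmetric]
    by blast
qed

definition kproj :: "('a::chilbert \<Rightarrow> 'a) \<Rightarrow> 'a \<Rightarrow> 'a" where
  "kproj c v = (SOME k. c k = 0 \<and> (\<forall>w. c w = 0 \<longrightarrow> cinner w (v - k) = 0))"

context
  fixes c :: "'a::chilbert \<Rightarrow> 'a"
  assumes cb: "bounded_op c"
begin

lemma ker_csub: "csub {v. c v = 0}"
  using bounded_lin[OF cb] unfolding csub_def by (auto simp: lin_zero lin_add lin_scaleC)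

lemma ker_closed: "cclosed {v. c v = 0}"
  unfolding cclosed_def
proof (intro allI impI)
  fix X L assume h: "(\<forall>n. X n \<in> {v. c v = 0}) \<and> conv X L"
  obtain K where K: "K > 0" "\<And>x. cnorm (c x) \<le> K * cnorm x" using bounded_bound[OF cb] by blast
  have "cnorm (c L) \<le> K * cnorm (X n - L)" for n
  proof -
    have "c L = - c (X n - L)" using h by (simp add: lin_diff[OF bounded_lin[OF cb]])
    then show ?thesis using K(2)[of "X n - L"] by (simp add: cnorm_minus)
  qed
  moreover have "(\<lambda>n. cnorm (X n - L)) \<longlonglongrightarrow> 0" using h conv_def by blast
  then have "(\<lambda>n. K * cnorm (X n - L)) \<longlonglongrightarrow> K * 0" by (intro tendsto_intros)
  ultimately have "cnorm (c L) \<le> K * 0" by (intro LIMSEQ_le[OF tendsto_const]) auto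
  then have "cnorm (c L) = 0" using cnorm_ge0[of "c L"] by simp
  then show "L \<in> {v. c v = 0}" by (simp add: cnorm_zero_iff)
qed

lemma kproj_spec: "c (kproj c v) = 0 \<and> (\<forall>w. c w = 0 \<longrightarrow> cinner w (v - kproj c v) = 0)"
proof -
  obtain k where "k \<in> {v. c v = 0}" "\<forall>w\<in>{v. c v = 0}. cinner w (v - k) = 0"
    using proj_exists[OF ker_csub ker_closed] by blast
  then have "\<exists>k. c k = 0 \<and> (\<forall>w. c w = 0 \<longrightarrow> cinner w (v - k) = 0)" by auto
  then show ?thesis unfolding kproj_def by (rule someI_ex)
qed

lemma kproj_ker: "c (kproj c v) = 0" using kproj_spec by blast
lemma kproj_orth: "c w = 0 \<Longrightarrow> cinner w (v - kproj c v) = 0" using kproj_spec by blast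

lemma kproj_unique:
  assumes "c k = 0" "\<And>w. c w = 0 \<Longrightarrow> cinner w (v - k) = 0"
  shows "kproj c v = k"
proof -
  define d where "d = k - kproj c v"
  have cd: "c d = 0" unfolding d_def using assms(1) kproj_ker by (simp add: lin_diff[OF bounded_lin[OF cb]])
  have "cinner d d = cinner d (v - kproj c v) - cinner d (v - k)" unfolding d_def
    by (simp add: cinner_diff_right)
  also have "\<dots> = 0" using kproj_orth[OF cd] assms(2)[OF cd] by simp
  finally have "d = 0" using cinner_self_eq_zero by blast
  then show ?thesis unfolding d_def by simp
qed

lemma kproj_lin: "lin (kproj c)"
  unfolding lin_def
proof (intro conjI allI)
  have l: "lin c" using bounded_lin[OF cb] .
  show "kproj c (x + y) = kproj c x + kproj c y" for x y
  proof (rule kproj_unique)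
    show "c (kproj c x + kproj c y) = 0" by (simp add: lin_add[OF l] kproj_ker)
    show "cinner w (x + y - (kproj c x + kproj c y)) = 0" if "c w = 0" for w
    proof -
      have eq: "x + y - (kproj c x + kproj c y) = (x - kproj c x) + (y - kproj c y)" by simp
      show ?thesis unfolding eq cinner_add_right
        using kproj_orth[OF that, of x] kproj_orth[OF that, of y] by simp
    qed
  qed
  show "kproj c (scaleC a x) = scaleC a (kproj c x)" for a x
  proof (rule kproj_unique)
    show "c (scaleC a (kproj c x)) = 0" by (simp add: lin_scaleC[OF l] kproj_ker)
    show "cinner w (scaleC a x - scaleC a (kproj c x)) = 0" if "c w = 0" for w
    proof -
      have eq: "scaleC a x - scaleC a (kproj c x) = scaleC a (x - kproj c x)" by (simp add: cm.scale_right_diff_distrib)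
      show ?thesis unfolding eq cinner_scaleC_right using kproj_orth[OF that, of x] by simp
    qed
  qed
qed

lemma kproj_inner1: "cinner (kproj c v) w = cinner (kproj c v) (kproj c w)"
proof -
  have "cinner (kproj c v) (w - kproj c w) = 0" by (rule kproj_orth[OF kproj_ker])
  then show ?thesis by (simp add: cinner_diff_right)
qed

lemma kproj_sym: "cinner (kproj c v) w = cinner v (kproj c w)"
proof -
  have "cinner (kproj c w) (v - kproj c v) = 0" by (rule kproj_orth[OF kproj_ker])
  then have "cinner (v - kproj c v) (kproj c w) = 0" by (subst cinner_commute) simp
  then have "cinner v (kproj c w) = cinner (kproj c v) (kproj c w)" by (simp add: cinner_diff_left)
  then show ?thesis using kproj_inner1 by simp
qed

lemma kproj_fix: "c v = 0 \<Longrightarrow> kproj c v = v"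
  by (rule kproj_unique) auto

lemma kproj_idem: "kproj c (kproj c v) = kproj c v"
  by (rule kproj_fix[OF kproj_ker])

lemma kproj_norm: "cnorm (kproj c v) \<le> cnorm v"
proof -
  have "(cnorm (kproj c v))^2 = Re (cinner (kproj c v) v)"
    unfolding cnorm_sq kproj_inner1[of v v] ..
  also have "\<dots> \<le> cnorm (kproj c v) * cnorm v"
    using CS_norm[of "kproj c v" v] complex_Re_le_cmod[of "cinner (kproj c v) v"] by linarith
  finally have "cnorm (kproj c v) * cnorm (kproj c v) \<le> cnorm (kproj c v) * cnorm v" by (simp add: power2_eq_square)
  then show ?thesis using cnorm_ge0[of "kproj c v"] cnorm_ge0[of v] mult_cancel_aux by blast
qed

lemma kproj_bounded: "bounded_op (kproj c)"
  by (rule boundedI[OF kproj_lin, of 1]) (simp add: kproj_norm)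

end

lemma vn_bounded: "von_neumann_algebra M \<Longrightarrow> T \<in> M \<Longrightarrow> bounded_op T"
  unfolding von_neumann_algebra_def by blast
lemma vn_adj: "von_neumann_algebra M \<Longrightarrow> T \<in> M \<Longrightarrow> adj T \<in> M"
  unfolding von_neumann_algebra_def by blast
lemma vn_memI: "von_neumann_algebra M \<Longrightarrow> bounded_op P \<Longrightarrow> (\<And>T. T \<in> commutant M \<Longrightarrow> P \<circ> T = T \<circ> P) \<Longrightarrow> P \<in> M"
proof -
  assume vn: "von_neumann_algebra M" and b: "bounded_op P" and h: "\<And>T. T \<in> commutant M \<Longrightarrow> P \<circ> T = T \<circ> P"
  have "P \<in> commutant (commutant M)" unfolding commutant_def[of "commutant M"] using b h by blast
  then show "P \<in> M" using vn unfolding von_neumann_algebra_def by simp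
qed
lemma comm_bounded: "T \<in> commutant M \<Longrightarrow> bounded_op T" unfolding commutant_def by blast
lemma comm_comm: "T \<in> commutant M \<Longrightarrow> A \<in> M \<Longrightarrow> T \<circ> A = A \<circ> T" unfolding commutant_def by blast

lemma comp_apply_eq: "f \<circ> g = g \<circ> f \<Longrightarrow> f (g x) = g (f x)"
  by (metis comp_apply)

lemma op_sub_apply: "op_sub A B v = A v - B v" unfolding op_sub_def by simp
lemma op_add_apply: "op_add A B v = A v + B v" unfolding op_add_def by simp

lemma range_proj_ker:
  fixes M :: "('a::chilbert \<Rightarrow> 'a) set" and c :: "'a \<Rightarrow> 'a"
  assumes vn: "von_neumann_algebra M" and cb: "bounded_op c"
    and cs: "\<And>x y. cinner (c x) y = cinner x (c y)"
    and cc: "\<And>T. T \<in> commutant M \<Longrightarrow> T \<circ> c = c \<circ> T"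
    and rp: "range_proj M c = id" and cv: "c v = 0"
  shows "v = 0"
proof -
  define P where "P = kproj c"
  define p where "p = op_sub id P"
  have pa: "p x = x - P x" for x unfolding p_def op_sub_apply by simp
  have cl: "lin c" using cb by (rule bounded_lin)
  have Pl: "lin P" unfolding P_def using kproj_lin[OF cb] .
  have Pb: "bounded_op P" unfolding P_def using kproj_bounded[OF cb] .
  have Psym: "cinner (P x) y = cinner x (P y)" for x y unfolding P_def using kproj_sym[OF cb] .
  have adjc: "adj c = c" using cs by (rule adj_self)
  have pl: "lin p" unfolding lin_def pa
    by (simp add: lin_add[OF Pl] lin_scaleC[OF Pl] cm.scale_right_diff_distrib)
  have pb: "bounded_op p"
  proof (rule boundedI[OF pl, of 2])
    fix x
    have "cnorm (x - P x) \<le> cnorm x + cnorm (P x)"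
      by (metis cnorm_minus cnorm_triangle diff_conv_add_uminus)
    then show "cnorm (p x) \<le> 2 * cnorm x" unfolding pa P_def using kproj_norm[OF cb, of x] by simp
  qed
  have psym: "cinner (p x) y = cinner x (p y)" for x y
    unfolding pa by (simp add: cinner_diff_left cinner_diff_right Psym)
  have pid: "p (p x) = p x" for x
    unfolding pa lin_diff[OF Pl] by (simp add: P_def kproj_idem[OF cb])
  have pM: "p \<in> M"
  proof (rule vn_memI[OF vn pb])
    fix T assume T: "T \<in> commutant M"
    have Tb: "bounded_op T" using T by (rule comm_bounded)
    have Tc: "T \<circ> c = c \<circ> T" using cc[OF T] .
    have "adj (T \<circ> c) = adj (c \<circ> T)" using Tc by simp
    then have aTc: "c \<circ> adj T = adj T \<circ> c" using adj_comp[OF Tb cb] adj_comp[OF cb Tb] adjc by simp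
    have PT: "P (T x) = T (P x)" for x
      unfolding P_def
    proof (rule kproj_unique[OF cb])
      show "c (T (kproj c x)) = 0" using comp_apply_eq[OF Tc, of "kproj c x"] kproj_ker[OF cb]
        lin_zero[OF bounded_lin[OF Tb]] by simp
      show "cinner w (T x - T (kproj c x)) = 0" if w: "c w = 0" for w
      proof -
        have "c (adj T w) = 0" using comp_apply_eq[OF aTc, of w] w lin_zero[OF adj_lin[OF Tb]] by simp
        then have "cinner (adj T w) (x - kproj c x) = 0" by (rule kproj_orth[OF cb])
        then show ?thesis by (simp add: lin_diff[OF bounded_lin[OF Tb], symmetric] adj_spec2[OF Tb])
      qed
    qed
    show "p \<circ> T = T \<circ> p"
      by (rule ext) (simp add: pa PT lin_diff[OF bounded_lin[OF Tb]])
  qed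
  have pproj: "is_proj p" unfolding is_proj_def
    using pid psym by (auto intro!: adj_self)
  have pc: "p \<circ> c = c"
  proof
    fix x
    have "P (c x) = 0" unfolding P_def
      by (rule kproj_unique[OF cb]) (auto simp: lin_zero[OF cl] cs[symmetric])
    then show "(p \<circ> c) x = c x" by (simp add: pa)
  qed
  have pmin: "op_le p q" if qM: "q \<in> M" and qp: "is_proj q" and qc: "q \<circ> c = c" for q
  proof -
    have qb: "bounded_op q" using vn qM by (rule vn_bounded)
    have ql: "lin q" using qb by (rule bounded_lin)
    have qsym: "cinner (q x) y = cinner x (q y)" for x y
      using adj_spec[OF qb, of x y] qp unfolding is_proj_def by simp
    have qq: "q (q x) = q x" for x using qp unfolding is_proj_def by (metis comp_apply)
    have cq: "c (q y) = c y" for y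
    proof (rule vec_eqI)
      fix x
      have "cinner x (c (q y)) = cinner (q (c x)) y" by (simp add: cs[symmetric] qsym)
      also have "\<dots> = cinner x (c y)" using comp_apply_eq qc by (metis comp_apply cs)
      finally show "cinner x (c (q y)) = cinner x (c y)" .
    qed
    define X where "X = op_sub q p"
    have Xa: "X v = q v - (v - P v)" for v unfolding X_def op_sub_apply pa ..
    show ?thesis unfolding op_le_def positive_op_def X_def[symmetric]
    proof (intro allI conjI)
      fix v
      have Xsym: "cinner (X x) y = cinner x (X y)" for x y
        unfolding X_def op_sub_apply by (simp add: cinner_diff_left cinner_diff_right qsym psym)
      show "Im (cinner v (X v)) = 0" by (rule sym_real[OF Xsym])
      define w where "w = v - q v"
      have cw: "c w = 0" unfolding w_def by (simp add: lin_diff[OF cl] cq)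
      have Pw: "P w = w" unfolding P_def by (rule kproj_fix[OF cb cw])
      have wq: "cinner w (q v) = 0" unfolding w_def
        by (simp add: cinner_diff_left qsym qq)
      have vdec: "v = q v + w" unfolding w_def by simp
      have "Re (cinner v v) = Re (cinner (q v) (q v)) + Re (cinner w w)"
        by (subst (1 2) vdec) (simp add: nsq_add Re_cinner_swap[of "q v" w] wq)
      moreover have "cinner v (q v) = cinner (q v) (q v)" by (simp add: qsym qq)
      moreover have "Re (cinner w w) \<le> Re (cinner v (P v))"
      proof -
        have ww: "cinner w w = cinner w (P v)"
        proof -
          have "cinner w w = cinner w v" using wq unfolding w_def by (simp add: cinner_diff_right)
          also have "\<dots> = cinner (P w) v" using Pw by simp
          finally show ?thesis by (simp add: Psym)
        qed
        have nw: "(cnorm w)^2 \<le> cnorm w * cnorm (P v)"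
          unfolding cnorm_sq ww using CS_norm[of w "P v"] complex_Re_le_cmod[of "cinner w (P v)"] by linarith
        have "cnorm w * cnorm w \<le> cnorm w * cnorm (P v)" using nw by (simp only: power2_eq_square)
        then have "cnorm w \<le> cnorm (P v)"
          by (rule mult_cancel_aux[OF cnorm_ge0 cnorm_ge0])
        then have "(cnorm w)^2 \<le> (cnorm (P v))^2" using cnorm_ge0 power_mono by blast
        moreover have "cinner v (P v) = cinner (P v) (P v)"
          using Psym[of v "P v"] P_def kproj_idem[OF cb] by simp
        ultimately show ?thesis unfolding cnorm_sq by simp
      qed
      ultimately show "0 \<le> Re (cinner v (X v))" unfolding Xa
        by (simp add: cinner_diff_right)
    qed
  qed
  define \<Phi> where "\<Phi> p' \<longleftrightarrow> p' \<in> M \<and> is_proj p' \<and> p' \<circ> c = c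
      \<and> (\<forall>q\<in>M. is_proj q \<and> q \<circ> c = c \<longrightarrow> op_le p' q)" for p'
  have Phip: "\<Phi> p" unfolding \<Phi>_def using pM pproj pc pmin by blast
  have uniq: "p' = p" if "\<Phi> p'" for p'
  proof -
    have p'M: "p' \<in> M" and le1: "op_le p' p" and le2: "op_le p p'"
      using that Phip unfolding \<Phi>_def by blast+
    have p'l: "lin p'" using vn_bounded[OF vn p'M] by (rule bounded_lin)
    define D where "D = op_sub p' p"
    have Dl: "lin D" unfolding lin_def D_def op_sub_apply
      by (simp add: lin_add[OF p'l] lin_scaleC[OF p'l] lin_add[OF pl] lin_scaleC[OF pl] cm.scale_right_diff_distrib)
    have "cinner v (D v) = 0" for v
    proof -
      have a: "Im (cinner v (D v)) = 0" "0 \<le> Re (cinner v (p v - p' v))"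
        using le1 le2 unfolding op_le_def positive_op_def D_def op_sub_apply by blast+
      have b: "0 \<le> Re (cinner v (D v))" using le2 le1 unfolding op_le_def positive_op_def D_def op_sub_apply by blast
      have "Re (cinner v (p v - p' v)) = - Re (cinner v (D v))" unfolding D_def op_sub_apply
        by (simp add: cinner_diff_right)
      then show ?thesis using a b by (simp add: complex_eq_iff)
    qed
    then have "D = (\<lambda>_. 0)" by (rule lin_zero_form[OF Dl])
    then show ?thesis unfolding D_def op_sub_def by (auto simp: fun_eq_iff)
  qed
  have "range_proj M c = p" unfolding range_proj_def \<Phi>_def[symmetric]
    using Phip uniq by (rule the_equality)
  then have "p = id" using rp by simp
  then have "p v = v" by simp
  moreover have "P v = v" unfolding P_def using kproj_fix[OF cb cv] .
  ultimately show ?thesis using pa[of v] by simp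
qed

inductive pp :: "('a::chilbert \<Rightarrow> 'a) \<Rightarrow> ('a \<Rightarrow> 'a) \<Rightarrow> bool" for S where
  pp0: "pp S (\<lambda>v. 0)"
| ppS: "pp S A \<Longrightarrow> 0 \<le> c \<Longrightarrow> pp S (\<lambda>v. A v + scaleC (complex_of_real c) ((S ^^ k) v))"

lemma pow_lin: "lin S \<Longrightarrow> lin (S ^^ k)"
proof (induction k)
  case 0 then show ?case by (simp add: lin_def)
next
  case (Suc k) then show ?case unfolding lin_def by (simp add: lin_add lin_scaleC)
qed

lemma pow_bound: "bounded_op S \<Longrightarrow> \<exists>B. \<forall>v. cnorm ((S ^^ k) v) \<le> B * cnorm v"
proof (induction k)
  case 0 then show ?case by (intro exI[of _ 1]) simp
next
  case (Suc k)
  then obtain B where B: "\<And>v. cnorm ((S ^^ k) v) \<le> B * cnorm v" by blast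
  obtain K where K: "K > 0" "\<And>x. cnorm (S x) \<le> K * cnorm x" using bounded_bound[OF Suc.prems] by blast
  have "cnorm ((S ^^ Suc k) v) \<le> (K * B) * cnorm v" for v
    using K(2)[of "(S ^^ k) v"] B[of v] K(1) by (simp add: mult.assoc) (meson mult_left_mono order_trans less_imp_le)
  then show ?case by blast
qed

lemma pow_bounded: "bounded_op S \<Longrightarrow> bounded_op (S ^^ k)"
  using pow_bound pow_lin bounded_lin boundedI by metis

lemma pow_comm: "lin W \<Longrightarrow> (\<And>x. W (S x) = S (W x)) \<Longrightarrow> W ((S ^^ k) x) = (S ^^ k) (W x)"
  by (induction k arbitrary: x) auto

lemma pow_sym: "(\<And>x y. cinner (S x) y = cinner x (S y)) \<Longrightarrow> cinner ((S ^^ k) x) y = cinner x ((S ^^ k) y)"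
proof (induction k arbitrary: x y)
  case 0 then show ?case by simp
next
  case (Suc k)
  have "cinner ((S ^^ Suc k) x) y = cinner ((S ^^ k) x) (S y)" by (simp add: Suc.prems)
  also have "\<dots> = cinner x ((S ^^ k) (S y))" using Suc by blast
  also have "(S ^^ k) (S y) = (S ^^ Suc k) y" by (simp add: funpow_swap1)
  finally show ?case .
qed

lemma pow_pos:
  assumes l: "lin S" and p: "positive_op S"
  shows "positive_op (S ^^ k)"
proof -
  have sy: "cinner (S x) y = cinner x (S y)" for x y using pos_sym[OF l p] .
  have psy: "cinner ((S ^^ j) x) y = cinner x ((S ^^ j) y)" for j x y using pow_sym[OF sy] .
  have "0 \<le> Re (cinner v ((S ^^ k) v))" for v
  proof (cases "even k")
    case True
    then obtain m where k: "k = m + m" by (metis evenE mult_2)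
    have "cinner v ((S ^^ k) v) = cinner ((S ^^ m) v) ((S ^^ m) v)"
      unfolding k funpow_add by (simp add: psy)
    then show ?thesis by (simp add: cinner_self_ge0)
  next
    case False
    then obtain m where k: "k = Suc (m + m)" by (metis oddE mult_2 add.commute plus_1_eq_Suc)
    have "S ^^ k = (S ^^ m) \<circ> (S ^^ Suc m)" unfolding k by (metis add_Suc_right funpow_add)
    then have "(S ^^ k) v = (S ^^ m) (S ((S ^^ m) v))" by simp
    then have "cinner v ((S ^^ k) v) = cinner ((S ^^ m) v) (S ((S ^^ m) v))" by (simp add: psy)
    then show ?thesis using pos_Re[OF p] by simp
  qed
  moreover have "Im (cinner v ((S ^^ k) v)) = 0" for v by (rule sym_real[OF psy])
  ultimately show ?thesis unfolding positive_op_def by blast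
qed

context
  fixes S :: "'a::chilbert \<Rightarrow> 'a"
  assumes Sb: "bounded_op S" and Sp: "positive_op S"
begin

lemma Sl: "lin S" using Sb by (rule bounded_lin)

lemma pp_lin: "pp S A \<Longrightarrow> lin A"
proof (induction rule: pp.induct)
  case pp0 then show ?case by (simp add: lin_def)
next
  case (ppS A c k)
  have l: "lin (S ^^ k)" using pow_lin[OF Sl] .
  show ?case using ppS.IH unfolding lin_def
    by (simp add: lin_add[OF l] lin_scaleC[OF l] cm.scale_right_distrib algebra_simps)
qed

lemma pp_bounded: "pp S A \<Longrightarrow> bounded_op A"
proof (induction rule: pp.induct)
  case pp0 then show ?case by (simp add: bounded_op_def) (rule exI[of _ 0], simp)
next
  case (ppS A c k)
  obtain B1 where B1: "\<And>v. cnorm (A v) \<le> B1 * cnorm v" using ppS.IH unfolding bounded_op_def by blast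
  obtain B2 where B2: "\<And>v. cnorm ((S ^^ k) v) \<le> B2 * cnorm v" using pow_bound[OF Sb] by blast
  have "cnorm (A v + scaleC (complex_of_real c) ((S ^^ k) v)) \<le> (B1 + \<bar>c\<bar> * B2) * cnorm v" for v
  proof -
    have "cnorm (A v + scaleC (complex_of_real c) ((S ^^ k) v)) \<le> cnorm (A v) + \<bar>c\<bar> * cnorm ((S ^^ k) v)"
      using cnorm_triangle[of "A v" "scaleC (complex_of_real c) ((S ^^ k) v)"] by (simp add: cnorm_scaleC)
    also have "\<dots> \<le> B1 * cnorm v + \<bar>c\<bar> * (B2 * cnorm v)"
      using B1[of v] B2[of v] by (simp add: add_mono mult_left_mono)
    finally show ?thesis by (simp add: algebra_simps)
  qed
  moreover have "lin (\<lambda>v. A v + scaleC (complex_of_real c) ((S ^^ k) v))"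
    using pp_lin[OF pp.ppS[OF ppS.hyps]] .
  ultimately show ?case by (intro boundedI) auto
qed

lemma pp_sym: "pp S A \<Longrightarrow> cinner (A x) y = cinner x (A y)"
proof (induction arbitrary: x y rule: pp.induct)
  case pp0 then show ?case by simp
next
  case (ppS A c k)
  have "cinner ((S ^^ k) x) y = cinner x ((S ^^ k) y)" by (rule pow_sym[OF pos_sym[OF Sl Sp]])
  then show ?case using ppS.IH by (simp add: cinner_add_left cinner_add_right cinner_scaleC_left cinner_scaleC_right)
qed

lemma pp_pos: "pp S A \<Longrightarrow> positive_op A"
proof (induction rule: pp.induct)
  case pp0 then show ?case by (simp add: positive_op_def)
next
  case (ppS A c k)
  have p: "positive_op (S ^^ k)" by (rule pow_pos[OF Sl Sp])
  show ?case unfolding positive_op_def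
  proof
    fix v
    have "cinner v (A v + scaleC (complex_of_real c) ((S ^^ k) v)) = cinner v (A v) + complex_of_real c * cinner v ((S ^^ k) v)"
      by (simp add: cinner_add_right cinner_scaleC_right)
    then show "Im (cinner v (A v + scaleC (complex_of_real c) ((S ^^ k) v))) = 0 \<and>
        0 \<le> Re (cinner v (A v + scaleC (complex_of_real c) ((S ^^ k) v)))"
      using ppS.IH p ppS.hyps(2) unfolding positive_op_def by simp
  qed
qed

lemma pp_comm: "pp S A \<Longrightarrow> lin W \<Longrightarrow> (\<And>x. W (S x) = S (W x)) \<Longrightarrow> W (A x) = A (W x)"
proof (induction arbitrary: x rule: pp.induct)
  case pp0 then show ?case by (simp add: lin_zero)
next
  case (ppS A c k)
  then show ?case by (simp add: lin_add lin_scaleC pow_comm)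
qed

lemma pp_commute: "pp S A \<Longrightarrow> pp S B \<Longrightarrow> A (B x) = B (A x)"
proof -
  assume a: "pp S A" and b: "pp S B"
  have "B (S y) = S (B y)" for y using pp_comm[OF b Sl] by metis
  then show ?thesis using pp_comm[OF a pp_lin[OF b]] by metis
qed

lemma pp_add: "pp S B \<Longrightarrow> pp S A \<Longrightarrow> pp S (\<lambda>v. A v + B v)"
proof (induction rule: pp.induct)
  case pp0 then show ?case by simp
next
  case (ppS B c k)
  have "pp S (\<lambda>v. (A v + B v) + scaleC (complex_of_real c) ((S ^^ k) v))"
    using ppS by (intro pp.ppS) auto
  then show ?case by (simp add: add.assoc)
qed

lemma pp_scale: "pp S A \<Longrightarrow> 0 \<le> d \<Longrightarrow> pp S (\<lambda>v. scaleC (complex_of_real d) (A v))"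
proof (induction rule: pp.induct)
  case pp0 then show ?case by (simp add: pp.pp0)
next
  case (ppS A c k)
  have "pp S (\<lambda>v. scaleC (complex_of_real d) (A v) + scaleC (complex_of_real (d * c)) ((S ^^ k) v))"
    using ppS by (intro pp.ppS) auto
  then show ?case by (simp add: cm.scale_right_distrib)
qed

lemma pp_pow: "pp S (S ^^ k)"
proof -
  have "pp S (\<lambda>v. 0 + scaleC (complex_of_real 1) ((S ^^ k) v))" by (intro pp.ppS pp.pp0) auto
  then show ?thesis by simp
qed

lemma pp_S: "pp S S" using pp_pow[of 1] by simp

lemma pp_comp_pow: "pp S A \<Longrightarrow> pp S (\<lambda>v. A ((S ^^ j) v))"
proof (induction rule: pp.induct)
  case pp0 then show ?case by (simp add: pp.pp0)
next
  case (ppS A c k)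
  have "pp S (\<lambda>v. A ((S ^^ j) v) + scaleC (complex_of_real c) ((S ^^ (k + j)) v))"
    using ppS by (intro pp.ppS) auto
  then show ?case by (simp add: funpow_add)
qed

lemma pp_comp: "pp S B \<Longrightarrow> pp S A \<Longrightarrow> pp S (\<lambda>v. A (B v))"
proof (induction rule: pp.induct)
  case pp0 then show ?case using lin_zero[OF pp_lin[OF pp0(1)]] by (simp add: pp.pp0)
next
  case (ppS B c k)
  have l: "lin A" using pp_lin[OF ppS.prems] .
  have "pp S (\<lambda>v. A (B v) + scaleC (complex_of_real c) (A ((S ^^ k) v)))"
    using pp_add[OF pp_scale[OF pp_comp_pow[OF ppS.prems] ppS.hyps(2)] ppS.IH[OF ppS.prems]] .
  then show ?case by (simp add: lin_add[OF l] lin_scaleC[OF l])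
qed

end

lemma squeeze0: "(\<And>n. 0 \<le> f n) \<Longrightarrow> (\<And>n. f n \<le> g n) \<Longrightarrow> g \<longlonglongrightarrow> 0 \<Longrightarrow> (f :: nat \<Rightarrow> real) \<longlonglongrightarrow> 0"
  by (rule tendsto_sandwich[where f="\<lambda>_. 0" and g=f and h=g]) auto

lemma conv_add: "conv X L \<Longrightarrow> conv Z L' \<Longrightarrow> conv (\<lambda>n. X n + Z n) (L + (L'::'a::chilbert))"
  unfolding conv_def
proof -
  assume a: "(\<lambda>n. cnorm (X n - L)) \<longlonglongrightarrow> 0" "(\<lambda>n. cnorm (Z n - L')) \<longlonglongrightarrow> 0"
  have "cnorm (X n + Z n - (L + L')) \<le> cnorm (X n - L) + cnorm (Z n - L')" for n
  proof -
    have "X n + Z n - (L + L') = (X n - L) + (Z n - L')" by simp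
    then show ?thesis using cnorm_triangle by metis
  qed
  moreover have "(\<lambda>n. cnorm (X n - L) + cnorm (Z n - L')) \<longlonglongrightarrow> 0 + 0" using a by (intro tendsto_intros)
  ultimately show "(\<lambda>n. cnorm (X n + Z n - (L + L'))) \<longlonglongrightarrow> 0"
    by (intro squeeze0[OF cnorm_ge0]) auto
qed

lemma conv_scale: "conv X L \<Longrightarrow> conv (\<lambda>n. scaleC c (X n)) (scaleC c (L::'a::chilbert))"
  unfolding conv_def
proof -
  assume a: "(\<lambda>n. cnorm (X n - L)) \<longlonglongrightarrow> 0"
  have "cnorm (scaleC c (X n) - scaleC c L) = cmod c * cnorm (X n - L)" for n
    by (simp add: cm.scale_right_diff_distrib[symmetric] cnorm_scaleC)
  moreover have "(\<lambda>n. cmod c * cnorm (X n - L)) \<longlonglongrightarrow> cmod c * 0" using a by (intro tendsto_intros)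
  ultimately show "(\<lambda>n. cnorm (scaleC c (X n) - scaleC c L)) \<longlonglongrightarrow> 0" by simp
qed

lemma conv_const: "conv (\<lambda>n. L) (L::'a::chilbert)"
  unfolding conv_def by simp

lemma conv_Suc: "conv X L \<Longrightarrow> conv (\<lambda>n. X (Suc n)) (L::'a::chilbert)"
  unfolding conv_def by (rule LIMSEQ_Suc)

lemma conv_op: assumes "bounded_op T" "conv X L" shows "conv (\<lambda>n. T (X n)) (T L)"
proof -
  obtain K where K: "K > 0" "\<And>x. cnorm (T x) \<le> K * cnorm x" using bounded_bound[OF assms(1)] by blast
  have "cnorm (T (X n) - T L) \<le> K * cnorm (X n - L)" for n
    using K(2)[of "X n - L"] by (simp add: lin_diff[OF bounded_lin[OF assms(1)]])
  moreover have "(\<lambda>n. K * cnorm (X n - L)) \<longlonglongrightarrow> K * 0" using assms(2) unfolding conv_def by (intro tendsto_intros)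
  ultimately show ?thesis unfolding conv_def by (intro squeeze0[OF cnorm_ge0]) auto
qed

lemma conv_norm_le: "conv X L \<Longrightarrow> (\<And>n. cnorm (X n) \<le> B) \<Longrightarrow> cnorm (L::'a::chilbert) \<le> B"
  using conv_cnorm by (metis LIMSEQ_le_const2)

primrec Yseq :: "('a::chilbert \<Rightarrow> 'a) \<Rightarrow> nat \<Rightarrow> 'a \<Rightarrow> 'a" where
  "Yseq S 0 = (\<lambda>v. 0)"
| "Yseq S (Suc n) = (\<lambda>v. scaleC (complex_of_real (1/2)) (S v + Yseq S n (Yseq S n v)))"

declare Yseq.simps(2)[simp del]

definition Ylim :: "('a::chilbert \<Rightarrow> 'a) \<Rightarrow> 'a \<Rightarrow> 'a" where
  "Ylim S v = (SOME L. conv (\<lambda>n. Yseq S n v) L)"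

context
  fixes S :: "'a::chilbert \<Rightarrow> 'a"
  assumes Sb: "bounded_op S" and Sp: "positive_op S" and Sle: "\<And>v. Re (cinner v (S v)) \<le> Re (cinner v v)"
begin

lemma Ypp: "pp S (Yseq S n)"
proof (induction n)
  case 0 then show ?case by (simp add: pp.pp0)
next
  case (Suc n)
  have "pp S (\<lambda>v. S v + Yseq S n (Yseq S n v))"
    by (rule pp_add[OF Sb Sp pp_comp[OF Sb Sp Suc Suc] pp_S[OF Sb Sp]])
  from pp_scale[OF Sb Sp this, of "1/2"] show ?case by (simp add: Yseq.simps(2))
qed

lemma Ylin: "lin (Yseq S n)" using pp_lin[OF Sb Sp Ypp] .
lemma Ypos: "positive_op (Yseq S n)" using pp_pos[OF Sb Sp Ypp] .
lemma Ysym: "cinner (Yseq S n x) y = cinner x (Yseq S n y)" using pp_sym[OF Sb Sp Ypp] .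

lemma Yle: "Re (cinner v (Yseq S n v)) \<le> Re (cinner v v)"
proof (induction n arbitrary: v)
  case 0 then show ?case by (simp add: cinner_self_ge0)
next
  case (Suc n)
  have a: "Re (cinner (Yseq S n v) (Yseq S n v)) \<le> Re (cinner v (Yseq S n v))"
    by (rule sq_le[OF Ylin Ypos Suc.IH])
  have b: "cinner v (Yseq S n (Yseq S n v)) = cinner (Yseq S n v) (Yseq S n v)" by (simp add: Ysym)
  have "Re (cinner v (Yseq S (Suc n) v)) = (Re (cinner v (S v)) + Re (cinner v (Yseq S n (Yseq S n v)))) / 2"
    by (simp add: cinner_scaleC_right cinner_add_right Yseq.simps(2))
  then show ?case using a b Sle[of v] Suc.IH[of v] by simp
qed

lemma Ynorm: "cnorm (Yseq S n v) \<le> cnorm v"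
proof -
  have a: "Re (cinner (Yseq S n v) (Yseq S n v)) \<le> Re (cinner v (Yseq S n v))" by (rule sq_le[OF Ylin Ypos Yle])
  have b: "Re (cinner v (Yseq S n v)) \<le> Re (cinner v v)" by (rule Yle)
  have "(cnorm (Yseq S n v))^2 \<le> (cnorm v)^2"
    unfolding cnorm_sq using a b by simp
  then show ?thesis using cnorm_ge0 power2_le_imp_le by blast
qed

lemma Dpp: "pp S (\<lambda>v. Yseq S (Suc n) v - Yseq S n v)"
proof (induction n)
  case 0 then show ?case using Ypp[of 1] by (simp add: Yseq.simps(2))
next
  case (Suc n)
  define D where "D v = Yseq S (Suc n) v - Yseq S n v" for v
  have Dl: "lin D" using pp_lin[OF Sb Sp Suc[folded D_def]] .
  have c: "Yseq S (Suc n) (Yseq S n v) = Yseq S n (Yseq S (Suc n) v)" for v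
    by (rule pp_commute[OF Sb Sp Ypp Ypp])
  have eq: "(\<lambda>v. Yseq S (Suc (Suc n)) v - Yseq S (Suc n) v)
      = (\<lambda>v. scaleC (complex_of_real (1/2)) (D (Yseq S (Suc n) v + Yseq S n v)))"
  proof
    fix v
    have "D (Yseq S (Suc n) v + Yseq S n v) =
      Yseq S (Suc n) (Yseq S (Suc n) v) - Yseq S n (Yseq S n v)"
      unfolding lin_add[OF Dl] D_def by (simp add: lin_add[OF Ylin] c)
    moreover have "Yseq S (Suc (Suc n)) v = scaleC (complex_of_real (1/2)) (S v + Yseq S (Suc n) (Yseq S (Suc n) v))"
      by (simp add: Yseq.simps(2)[of S "Suc n"])
    moreover have "Yseq S (Suc n) v = scaleC (complex_of_real (1/2)) (S v + Yseq S n (Yseq S n v))"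
      by (simp add: Yseq.simps(2)[of S n])
    ultimately show "Yseq S (Suc (Suc n)) v - Yseq S (Suc n) v = scaleC (complex_of_real (1/2)) (D (Yseq S (Suc n) v + Yseq S n v))"
      by (simp add: cm.scale_right_diff_distrib cm.scale_right_distrib)
  qed
  have "pp S (\<lambda>v. D (Yseq S (Suc n) v + Yseq S n v))"
    by (rule pp_comp[OF Sb Sp pp_add[OF Sb Sp Ypp Ypp]]) (use Suc D_def in simp)
  from pp_scale[OF Sb Sp this, of "1/2"] show ?case unfolding eq by simp
qed

lemma Dmono: "n \<le> m \<Longrightarrow> pp S (\<lambda>v. Yseq S m v - Yseq S n v)"
proof (induction m)
  case 0 then show ?case by (simp add: pp.pp0)
next
  case (Suc m)
  show ?case
  proof (cases "n = Suc m")
    case True then show ?thesis by (simp add: pp.pp0)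
  next
    case False
    then have "pp S (\<lambda>v. Yseq S m v - Yseq S n v)" using Suc by simp
    from pp_add[OF Sb Sp Dpp this, of m] show ?thesis by simp
  qed
qed

lemma r_mono: "n \<le> m \<Longrightarrow> Re (cinner v (Yseq S n v)) \<le> Re (cinner v (Yseq S m v))"
proof -
  assume nm: "n \<le> m"
  have "0 \<le> Re (cinner v (Yseq S m v - Yseq S n v))"
    using pos_Re[OF pp_pos[OF Sb Sp Dmono[OF nm]]] by simp
  then show ?thesis by (simp add: cinner_diff_right)
qed

lemma Dnorm: "n \<le> m \<Longrightarrow> Re (cinner (Yseq S m v - Yseq S n v) (Yseq S m v - Yseq S n v))
    \<le> Re (cinner v (Yseq S m v)) - Re (cinner v (Yseq S n v))"
proof -
  assume nm: "n \<le> m"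
  define D where "D v = Yseq S m v - Yseq S n v" for v
  have Dp: "pp S D" unfolding D_def using Dmono[OF nm] .
  have Dle: "Re (cinner w (D w)) \<le> Re (cinner w w)" for w
    using Yle[of w m] pos_Re[OF Ypos[of n], of w] unfolding D_def by (simp add: cinner_diff_right)
  have "Re (cinner (D v) (D v)) \<le> Re (cinner v (D v))"
    by (rule sq_le[OF pp_lin[OF Sb Sp Dp] pp_pos[OF Sb Sp Dp] Dle])
  then show ?thesis unfolding D_def by (simp add: cinner_diff_right)
qed

lemma Yconv: "conv (\<lambda>n. Yseq S n v) (Ylim S v)"
proof -
  define r where "r n = Re (cinner v (Yseq S n v))" for n
  have "incseq r" unfolding r_def by (intro incseq_SucI r_mono) simp
  moreover have "r n \<le> Re (cinner v v)" for n unfolding r_def by (rule Yle)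
  ultimately obtain L where "r \<longlonglongrightarrow> L" using incseq_convergent[of r] by blast
  then have "convergent r" by (rule convergentI)
  then have "Cauchy r" by (rule convergent_Cauchy)
  have "\<exists>N. \<forall>m\<ge>N. \<forall>n\<ge>N. cnorm (Yseq S m v - Yseq S n v) < e" if e: "e > 0" for e
  proof -
    obtain N where N: "\<And>m n. m \<ge> N \<Longrightarrow> n \<ge> N \<Longrightarrow> dist (r m) (r n) < e^2"
      using \<open>Cauchy r\<close> e unfolding Cauchy_def by (meson zero_less_power)
    have "cnorm (Yseq S m v - Yseq S n v) < e" if "m \<ge> N" "n \<ge> N" for m n
    proof -
      have key: "(cnorm (Yseq S m v - Yseq S n v))^2 < e^2" if "m \<ge> N" "n \<ge> N" "n \<le> m" for m n
        using Dnorm[OF that(3), of v] N[OF that(1,2)] unfolding cnorm_sq r_def dist_real_def by linarith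
      have "(cnorm (Yseq S m v - Yseq S n v))^2 < e^2"
      proof (cases "n \<le> m")
        case True then show ?thesis using key that by blast
      next
        case False then show ?thesis using key[of n m] that cnorm_minus_commute[of "Yseq S n v" "Yseq S m v"] by simp
      qed
      then show ?thesis using e power2_less_imp_less by (metis less_le)
    qed
    then show ?thesis by blast
  qed
  then obtain L where "conv (\<lambda>n. Yseq S n v) L" using complete_conv[of "\<lambda>n. Yseq S n v"] by blast
  then show ?thesis unfolding Ylim_def by (rule someI)
qed

lemma Ylim_lin: "lin (Ylim S)"
  unfolding lin_def
proof (intro conjI allI)
  fix x y
  have "conv (\<lambda>n. Yseq S n x + Yseq S n y) (Ylim S x + Ylim S y)" by (rule conv_add[OF Yconv Yconv])
  moreover have "conv (\<lambda>n. Yseq S n x + Yseq S n y) (Ylim S (x + y))" using Yconv[of "x + y"] by (simp add: lin_add[OF Ylin])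
  ultimately show "Ylim S (x + y) = Ylim S x + Ylim S y" using conv_unique by blast
next
  fix c x
  have "conv (\<lambda>n. scaleC c (Yseq S n x)) (scaleC c (Ylim S x))" by (rule conv_scale[OF Yconv])
  moreover have "conv (\<lambda>n. scaleC c (Yseq S n x)) (Ylim S (scaleC c x))" using Yconv[of "scaleC c x"] by (simp add: lin_scaleC[OF Ylin])
  ultimately show "Ylim S (scaleC c x) = scaleC c (Ylim S x)" using conv_unique by blast
qed

lemma Ylim_norm: "cnorm (Ylim S v) \<le> cnorm v"
  by (rule conv_norm_le[OF Yconv Ynorm])

lemma Ylim_bounded: "bounded_op (Ylim S)"
  by (rule boundedI[OF Ylim_lin, of 1]) (simp add: Ylim_norm)

lemma Ylim_inner: "(\<lambda>n. cinner w (Yseq S n v)) \<longlonglongrightarrow> cinner w (Ylim S v)"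
  by (rule conv_cinner[OF Yconv])

lemma Ylim_sym: "cinner (Ylim S x) y = cinner x (Ylim S y)"
proof -
  have "(\<lambda>n. cinner x (Yseq S n y)) \<longlonglongrightarrow> cinner x (Ylim S y)" by (rule Ylim_inner)
  moreover have "(\<lambda>n. cinner x (Yseq S n y)) \<longlonglongrightarrow> cnj (cinner y (Ylim S x))"
  proof -
    have "(\<lambda>n. cnj (cinner y (Yseq S n x))) \<longlonglongrightarrow> cnj (cinner y (Ylim S x))"
      by (intro tendsto_cnj Ylim_inner)
    moreover have "cnj (cinner y (Yseq S n x)) = cinner x (Yseq S n y)" for n
      by (metis Ysym cinner_commute)
    ultimately show ?thesis by simp
  qed
  ultimately have "cinner x (Ylim S y) = cnj (cinner y (Ylim S x))" by (rule LIMSEQ_unique)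
  then show ?thesis by (metis cinner_commute)
qed

lemma Ylim_le: "0 \<le> Re (cinner v (Ylim S v)) \<and> Re (cinner v (Ylim S v)) \<le> Re (cinner v v)"
proof -
  have t: "(\<lambda>n. Re (cinner v (Yseq S n v))) \<longlonglongrightarrow> Re (cinner v (Ylim S v))"
    by (intro tendsto_Re Ylim_inner)
  have "0 \<le> Re (cinner v (Ylim S v))" using pos_Re[OF Ypos] by (intro LIMSEQ_le_const[OF t]) auto
  moreover have "Re (cinner v (Ylim S v)) \<le> Re (cinner v v)" using Yle by (intro LIMSEQ_le_const2[OF t]) auto
  ultimately show ?thesis by blast
qed

lemma Ylim_fix: "scaleC 2 (Ylim S v) = S v + Ylim S (Ylim S v)"
proof -
  define Y where "Y = Ylim S"
  have c1: "conv (\<lambda>n. Yseq S n (Yseq S n v)) (Y (Y v))"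
  proof -
    have "cnorm (Yseq S n (Yseq S n v) - Y (Y v)) \<le> cnorm (Yseq S n v - Y v) + cnorm (Yseq S n (Y v) - Y (Y v))" for n
    proof -
      have "Yseq S n (Yseq S n v) - Y (Y v) = Yseq S n (Yseq S n v - Y v) + (Yseq S n (Y v) - Y (Y v))"
        by (simp add: lin_diff[OF Ylin])
      then have "cnorm (Yseq S n (Yseq S n v) - Y (Y v)) \<le> cnorm (Yseq S n (Yseq S n v - Y v)) + cnorm (Yseq S n (Y v) - Y (Y v))"
        using cnorm_triangle by metis
      then show ?thesis using Ynorm[of n "Yseq S n v - Y v"] by linarith
    qed
    moreover have "(\<lambda>n. cnorm (Yseq S n v - Y v) + cnorm (Yseq S n (Y v) - Y (Y v))) \<longlonglongrightarrow> 0 + 0"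
      using Yconv[of v] Yconv[of "Y v"] unfolding conv_def Y_def by (intro tendsto_intros)
    ultimately show ?thesis unfolding conv_def by (intro squeeze0[OF cnorm_ge0]) auto
  qed
  have "conv (\<lambda>n. Yseq S (Suc n) v) (scaleC (complex_of_real (1/2)) (S v + Y (Y v)))"
    using conv_scale[OF conv_add[OF conv_const c1]] by (simp add: Yseq.simps(2))
  moreover have "conv (\<lambda>n. Yseq S (Suc n) v) (Y v)" unfolding Y_def by (rule conv_Suc[OF Yconv])
  ultimately have "Y v = scaleC (complex_of_real (1/2)) (S v + Y (Y v))" using conv_unique by blast
  then have "scaleC 2 (Y v) = scaleC 2 (scaleC (complex_of_real (1/2)) (S v + Y (Y v)))" by (rule arg_cong)
  also have "\<dots> = S v + Y (Y v)" by simp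
  finally show ?thesis unfolding Y_def .
qed

lemma Ylim_comm:
  assumes Wb: "bounded_op W" and WS: "\<And>x. W (S x) = S (W x)"
  shows "W (Ylim S v) = Ylim S (W v)"
proof -
  have "conv (\<lambda>n. W (Yseq S n v)) (W (Ylim S v))" by (rule conv_op[OF Wb Yconv])
  moreover have "W (Yseq S n v) = Yseq S n (W v)" for n
    by (rule pp_comm[OF Sb Sp Ypp bounded_lin[OF Wb] WS])
  ultimately have "conv (\<lambda>n. Yseq S n (W v)) (W (Ylim S v))" by simp
  then show ?thesis using Yconv conv_unique by blast
qed

end

lemma sqrt01:
  fixes T :: "'a::chilbert \<Rightarrow> 'a"
  assumes Tb: "bounded_op T" and Tp: "positive_op T" and Tle: "\<And>v. Re (cinner v (T v)) \<le> Re (cinner v v)"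
  shows "\<exists>R. bounded_op R \<and> positive_op R \<and> R \<circ> R = T \<and> (\<forall>W. bounded_op W \<and> W \<circ> T = T \<circ> W \<longrightarrow> W \<circ> R = R \<circ> W)"
proof -
  have Tl: "lin T" using Tb by (rule bounded_lin)
  define S where "S v = v - T v" for v
  have Sl: "lin S" unfolding lin_def S_def by (simp add: lin_add[OF Tl] lin_scaleC[OF Tl] cm.scale_right_diff_distrib)
  obtain K where K: "K > 0" "\<And>x. cnorm (T x) \<le> K * cnorm x" using bounded_bound[OF Tb] by blast
  have Sb: "bounded_op S"
  proof (rule boundedI[OF Sl, of "1 + K"])
    fix x
    have "cnorm (x - T x) \<le> cnorm x + cnorm (T x)" by (metis cnorm_minus cnorm_triangle diff_conv_add_uminus)
    then show "cnorm (S x) \<le> (1 + K) * cnorm x" unfolding S_def using K(2)[of x] by (simp add: algebra_simps)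
  qed
  have Tsym: "cinner (T x) y = cinner x (T y)" for x y by (rule pos_sym[OF Tl Tp])
  have Ssym: "cinner (S x) y = cinner x (S y)" for x y unfolding S_def by (simp add: cinner_diff_left cinner_diff_right Tsym)
  have Sp: "positive_op S" unfolding positive_op_def
  proof
    fix v
    show "Im (cinner v (S v)) = 0 \<and> 0 \<le> Re (cinner v (S v))"
      using sym_real[OF Ssym, of v] Tle[of v] unfolding S_def by (simp add: cinner_diff_right)
  qed
  have Sle: "Re (cinner v (S v)) \<le> Re (cinner v v)" for v
    using pos_Re[OF Tp, of v] unfolding S_def by (simp add: cinner_diff_right)
  define Y where "Y = Ylim S"
  have Yl: "lin Y" unfolding Y_def by (rule Ylim_lin[OF Sb Sp Sle])
  have Ysym: "cinner (Y x) y = cinner x (Y y)" for x y unfolding Y_def by (rule Ylim_sym[OF Sb Sp Sle])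
  have Yle: "0 \<le> Re (cinner v (Y v)) \<and> Re (cinner v (Y v)) \<le> Re (cinner v v)" for v
    unfolding Y_def by (rule Ylim_le[OF Sb Sp Sle])
  have Ynorm: "cnorm (Y v) \<le> cnorm v" for v unfolding Y_def by (rule Ylim_norm[OF Sb Sp Sle])
  have Yfix: "scaleC 2 (Y v) = S v + Y (Y v)" for v unfolding Y_def by (rule Ylim_fix[OF Sb Sp Sle])
  define R where "R v = v - Y v" for v
  have Rl: "lin R" unfolding lin_def R_def by (simp add: lin_add[OF Yl] lin_scaleC[OF Yl] cm.scale_right_diff_distrib)
  have Rb: "bounded_op R"
  proof (rule boundedI[OF Rl, of 2])
    fix x
    have "cnorm (x - Y x) \<le> cnorm x + cnorm (Y x)" by (metis cnorm_minus cnorm_triangle diff_conv_add_uminus)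
    then show "cnorm (R x) \<le> 2 * cnorm x" unfolding R_def using Ynorm[of x] by simp
  qed
  have Rsym: "cinner (R x) y = cinner x (R y)" for x y unfolding R_def by (simp add: cinner_diff_left cinner_diff_right Ysym)
  have Rp: "positive_op R" unfolding positive_op_def
  proof
    fix v
    show "Im (cinner v (R v)) = 0 \<and> 0 \<le> Re (cinner v (R v))"
      using sym_real[OF Rsym, of v] Yle[of v] unfolding R_def by (simp add: cinner_diff_right)
  qed
  have RR: "R \<circ> R = T"
  proof
    fix v
    have two: "scaleC 2 (Y v) = Y v + Y v" using cm.scale_left_distrib[of 1 1 "Y v"] by simp
    have E: "Y (Y v) = Y v + Y v - v + T v" using Yfix[of v] unfolding two S_def
      by (simp add: algebra_simps)
    have "R (R v) = v - Y v - (Y v - Y (Y v))" unfolding R_def by (simp add: lin_diff[OF Yl])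
    also have "\<dots> = T v" unfolding E by (simp add: algebra_simps)
    finally show "(R \<circ> R) v = T v" by simp
  qed
  have Rc: "W \<circ> R = R \<circ> W" if Wb: "bounded_op W" and WT: "W \<circ> T = T \<circ> W" for W
  proof
    fix v
    have Wl: "lin W" using Wb by (rule bounded_lin)
    have WS: "W (S x) = S (W x)" for x unfolding S_def using comp_apply_eq[OF WT] by (simp add: lin_diff[OF Wl])
    have "W (Y v) = Y (W v)" unfolding Y_def by (rule Ylim_comm[OF Sb Sp Sle Wb WS])
    then show "(W \<circ> R) v = (R \<circ> W) v" unfolding R_def by (simp add: lin_diff[OF Wl])
  qed
  show ?thesis using Rb Rp RR Rc by blast
qed

lemma sqrt_unique:
  fixes R1 R2 :: "'a::chilbert \<Rightarrow> 'a"
  assumes b1: "bounded_op R1" and p1: "positive_op R1" and b2: "bounded_op R2" and p2: "positive_op R2"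
    and sq: "R1 \<circ> R1 = R2 \<circ> R2" and c: "R1 \<circ> R2 = R2 \<circ> R1"
  shows "R1 = R2"
proof
  fix v
  have l1: "lin R1" and l2: "lin R2" using b1 b2 by (simp_all add: bounded_lin)
  define D where "D x = R1 x - R2 x" for x
  have Dsym: "cinner (D x) y = cinner x (D y)" for x y
    unfolding D_def by (simp add: cinner_diff_left cinner_diff_right pos_sym[OF l1 p1] pos_sym[OF l2 p2])
  define z where "z = D v"
  have sq': "R1 (R1 x) = R2 (R2 x)" for x using sq by (metis comp_apply)
  have c': "R1 (R2 x) = R2 (R1 x)" for x using c by (metis comp_apply)
  have "R1 z + R2 z = 0" unfolding z_def D_def
    by (simp add: lin_diff[OF l1] lin_diff[OF l2] sq' c')
  then have "Re (cinner z (R1 z)) + Re (cinner z (R2 z)) = 0"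
    by (metis cinner_add_right cinner_zero_right plus_complex.sel(1) zero_complex.sel(1))
  then have "Re (cinner z (R1 z)) = 0" "Re (cinner z (R2 z)) = 0"
    using pos_Re[OF p1, of z] pos_Re[OF p2, of z] by linarith+
  then have "R1 z = 0" "R2 z = 0" using pos_zero[OF l1 p1] pos_zero[OF l2 p2] by blast+
  then have "D z = 0" unfolding D_def by simp
  then have "cinner z z = 0" unfolding z_def by (simp add: Dsym[symmetric])
  then have "z = 0" using cinner_self_eq_zero by blast
  then show "R1 v = R2 v" unfolding z_def D_def by simp
qed

lemma abs_op_spec:
  fixes u :: "'a::chilbert \<Rightarrow> 'a"
  assumes ub: "bounded_op u" and us: "\<And>x y. cinner (u x) y = cinner x (u y)"
  shows "bounded_op (abs_op u) \<and> positive_op (abs_op u) \<and> abs_op u \<circ> abs_op u = u \<circ> u"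
proof -
  have adju: "adj u = u" using us by (rule adj_self)
  have ul: "lin u" using ub by (rule bounded_lin)
  obtain K where K: "K > 0" "\<And>x. cnorm (u x) \<le> K * cnorm x" using bounded_bound[OF ub] by blast
  define c where "c = complex_of_real (1 / K^2)"
  define T' where "T' v = scaleC c (u (u v))" for v
  have T'l: "lin T'" unfolding lin_def T'_def by (simp add: lin_add[OF ul] lin_scaleC[OF ul] cm.scale_right_distrib mult.commute)
  have T'b: "bounded_op T'"
  proof (rule boundedI[OF T'l, of "cmod c * K * K"])
    fix x
    have "cnorm (u (u x)) \<le> K * (K * cnorm x)" using K(2)[of "u x"] K(2)[of x] K(1)
      by (meson mult_left_mono order_trans less_imp_le)
    then show "cnorm (T' x) \<le> cmod c * K * K * cnorm x" unfolding T'_def cnorm_scaleC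
      by (simp add: mult.assoc mult_left_mono)
  qed
  have iuu: "cinner v (u (u v)) = cinner (u v) (u v)" for v by (simp add: us)
  have T'p: "positive_op T'" unfolding positive_op_def T'_def
  proof
    fix v
    show "Im (cinner v (scaleC c (u (u v)))) = 0 \<and> 0 \<le> Re (cinner v (scaleC c (u (u v))))"
      unfolding cinner_scaleC_right iuu c_def using cinner_self_Im[of "u v"] cinner_self_ge0[of "u v"] by simp
  qed
  have T'le: "Re (cinner v (T' v)) \<le> Re (cinner v v)" for v
  proof -
    have "Re (cinner v (T' v)) = (cnorm (u v))^2 / K^2" unfolding T'_def cinner_scaleC_right iuu c_def cnorm_sq
      by simp
    also have "\<dots> \<le> (K * cnorm v)^2 / K^2" using K(2)[of v] cnorm_ge0[of "u v"]
      by (intro divide_right_mono power_mono) auto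
    also have "\<dots> = Re (cinner v v)" using K(1) by (simp add: power_mult_distrib cnorm_sq)
    finally show ?thesis .
  qed
  obtain R' where R': "bounded_op R'" "positive_op R'" "R' \<circ> R' = T'"
    "\<And>W. bounded_op W \<Longrightarrow> W \<circ> T' = T' \<circ> W \<Longrightarrow> W \<circ> R' = R' \<circ> W"
    using sqrt01[OF T'b T'p T'le] by blast
  have R'l: "lin R'" using R'(1) by (rule bounded_lin)
  define R where "R v = scaleC (complex_of_real K) (R' v)" for v
  have Rl: "lin R" unfolding lin_def R_def by (simp add: lin_add[OF R'l] lin_scaleC[OF R'l] cm.scale_right_distrib mult.commute)
  have Rb: "bounded_op R"
  proof -
    obtain B where B: "\<And>x. cnorm (R' x) \<le> B * cnorm x" using R'(1) unfolding bounded_op_def by blast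
    have "cnorm (R x) \<le> (K * B) * cnorm x" for x unfolding R_def cnorm_scaleC using B[of x] K(1)
      by (simp add: mult.assoc mult_left_mono)
    then show ?thesis by (rule boundedI[OF Rl])
  qed
  have Rp: "positive_op R" unfolding positive_op_def R_def cinner_scaleC_right
    using R'(2) K(1) unfolding positive_op_def by simp
  have RR: "R \<circ> R = u \<circ> u"
  proof
    fix v
    have "R (R v) = scaleC (complex_of_real (K * K)) (R' (R' v))" unfolding R_def by (simp add: lin_scaleC[OF R'l])
    also have "R' (R' v) = T' v" using R'(3) by (metis comp_apply)
    also have "scaleC (complex_of_real (K * K)) (T' v) = u (u v)" unfolding T'_def c_def using K(1)
      by (simp add: power2_eq_square)
    finally show "(R \<circ> R) v = (u \<circ> u) v" by simp
  qed
  have Rc: "W \<circ> R = R \<circ> W" if Wb: "bounded_op W" and Wc: "W \<circ> (u \<circ> u) = (u \<circ> u) \<circ> W" for W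
  proof -
    have Wl: "lin W" using Wb by (rule bounded_lin)
    have "W \<circ> T' = T' \<circ> W"
    proof
      fix x show "(W \<circ> T') x = (T' \<circ> W) x" unfolding T'_def using comp_apply_eq[OF Wc, of x]
        by (simp add: lin_scaleC[OF Wl])
    qed
    then have "W \<circ> R' = R' \<circ> W" using R'(4) Wb by blast
    then have "W (R' x) = R' (W x)" for x by (rule comp_apply_eq)
    then show ?thesis unfolding R_def by (simp add: fun_eq_iff lin_scaleC[OF Wl])
  qed
  have uniq: "y = R" if "bounded_op y \<and> positive_op y \<and> y \<circ> y = adj u \<circ> u" for y
  proof -
    have yb: "bounded_op y" and yp: "positive_op y" and yy: "y \<circ> y = u \<circ> u" using that adju by auto
    have "y \<circ> (u \<circ> u) = (u \<circ> u) \<circ> y" unfolding yy[symmetric] by (simp add: comp_assoc)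
    then have "y \<circ> R = R \<circ> y" by (rule Rc[OF yb])
    moreover have "y \<circ> y = R \<circ> R" using yy RR by simp
    ultimately show ?thesis by (intro sqrt_unique[OF yb yp Rb Rp]) auto
  qed
  have P: "bounded_op R \<and> positive_op R \<and> R \<circ> R = adj u \<circ> u" using Rb Rp RR adju by simp
  have "abs_op u = R" unfolding abs_op_def
    by (rule the_equality[where P="\<lambda>y. bounded_op y \<and> positive_op y \<and> y \<circ> y = adj u \<circ> u", OF P uniq])
  then show ?thesis using Rb Rp RR by simp
qed

lemma bounded_id: "bounded_op (id::'a::chilbert \<Rightarrow> 'a)"
  by (rule boundedI[of _ 1]) (auto simp: lin_def)

lemma bounded_sub: assumes "bounded_op A" "bounded_op B" shows "bounded_op (op_sub A B)"
proof -
  have la: "lin A" and lb: "lin B" using assms by (simp_all add: bounded_lin)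
  obtain K1 where K1: "\<And>x. cnorm (A x) \<le> K1 * cnorm x" using assms(1) unfolding bounded_op_def by blast
  obtain K2 where K2: "\<And>x. cnorm (B x) \<le> K2 * cnorm x" using assms(2) unfolding bounded_op_def by blast
  have l: "lin (op_sub A B)" unfolding lin_def op_sub_apply
    by (simp add: lin_add[OF la] lin_add[OF lb] lin_scaleC[OF la] lin_scaleC[OF lb] cm.scale_right_diff_distrib)
  have "cnorm (A x - B x) \<le> (K1 + K2) * cnorm x" for x
  proof -
    have "cnorm (A x - B x) \<le> cnorm (A x) + cnorm (B x)" by (metis cnorm_minus cnorm_triangle diff_conv_add_uminus)
    then show ?thesis using K1[of x] K2[of x] by (simp add: algebra_simps)
  qed
  then show ?thesis using l by (intro boundedI) (auto simp: op_sub_apply)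
qed

lemma sym_sub: "(\<And>x y. cinner (A x) y = cinner x (A y)) \<Longrightarrow> (\<And>x y. cinner (B x) y = cinner x (B y))
  \<Longrightarrow> cinner (op_sub A B x) y = cinner x (op_sub A B y)"
  by (simp add: op_sub_apply cinner_diff_left cinner_diff_right)

lemma double_cancel: "(y::'a::chilbert) + y = z + z \<Longrightarrow> y = z"
proof -
  assume h: "y + y = z + z"
  have "y = scaleC (1/2) (y + y)" by (simp add: cm.scale_right_distrib cm.scale_left_distrib[symmetric])
  also have "\<dots> = scaleC (1/2) (z + z)" using h by simp
  also have "\<dots> = z" by (simp add: cm.scale_right_distrib cm.scale_left_distrib[symmetric])
  finally show ?thesis .
qed

lemma effect_facts:
  assumes "effect a" "bounded_op a"
  shows "positive_op a" "positive_op (op_sub id a)" "lin a"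
    "\<And>x y. cinner (a x) y = cinner x (a y)"
  using assms unfolding effect_def op_le_def by (auto intro: pos_sym bounded_lin)

lemma strict_ker:
  fixes M :: "('a::chilbert \<Rightarrow> 'a) set"
  assumes vn: "von_neumann_algebra M" and aM: "a \<in> M" and st: "strict M a"
  shows "a v = 0 \<Longrightarrow> v = 0" and "a v = v \<Longrightarrow> v = 0"
proof -
  have ab: "bounded_op a" using vn aM by (rule vn_bounded)
  have eff: "effect a" using st unfolding strict_def by blast
  note ef = effect_facts[OF eff ab]
  have rp0: "range_proj M a = id"
  proof
    fix x
    have "null_proj M a x = 0" using st unfolding strict_def op_zero_def by simp
    then show "range_proj M a x = id x" unfolding null_proj_def op_sub_apply by simp
  qed
  have rp1: "range_proj M (op_sub id a) = id"
  proof
    fix x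
    have "supp_proj M a x = 0" using st unfolding strict_def op_zero_def by simp
    then show "range_proj M (op_sub id a) x = id x" unfolding supp_proj_def op_sub_apply by simp
  qed
  show "v = 0" if "a v = 0"
  proof (rule range_proj_ker[OF vn ab ef(4) _ rp0 that])
    fix T assume "T \<in> commutant M" then show "T \<circ> a = a \<circ> T" using aM by (rule comm_comm)
  qed
  have ss: "cinner (op_sub id a x) y = cinner x (op_sub id a y)" for x y
    by (rule sym_sub) (simp_all add: ef(4))
  show "v = 0" if "a v = v"
  proof (rule range_proj_ker[OF vn bounded_sub[OF bounded_id ab] ss _ rp1])
    fix T assume T: "T \<in> commutant M"
    have Tl: "lin T" using comm_bounded[OF T] by (rule bounded_lin)
    show "T \<circ> op_sub id a = op_sub id a \<circ> T"
    proof
      fix x show "(T \<circ> op_sub id a) x = (op_sub id a \<circ> T) x"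
        using comp_apply_eq[OF comm_comm[OF T aM], of x] by (simp add: op_sub_apply lin_diff[OF Tl])
    qed
  next
    show "op_sub id a v = 0" using that by (simp add: op_sub_apply)
  qed
qed

theorem proposition2p4:
  fixes M :: "('h::chilbert \<Rightarrow> 'h) set" and a :: "'h \<Rightarrow> 'h"
  assumes "von_neumann_algebra M" and "a \<in> M" and "strict M a"
  shows "range_proj M (op_sub id a) = id
    \<and> (\<forall>b\<in>M. effect b \<and> abs_compatible a b \<and> a \<circ> b = b \<circ> a \<longrightarrow> is_proj b)
    \<and> (\<forall>b\<in>M. effect b \<and> strict M b \<and> abs_compatible a b \<longrightarrow> a \<circ> b \<noteq> b \<circ> a)
    \<and> (\<forall>x\<in>M. adj x \<circ> (a \<circ> a) \<circ> x = adj x \<circ> x \<longrightarrow> x = op_zero)"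
proof -
  note vn = assms(1) and aM = assms(2) and st = assms(3)
  have ab: "bounded_op a" using vn aM by (rule vn_bounded)
  have eff: "effect a" using st unfolding strict_def by blast
  note ef = effect_facts[OF eff ab]
  have al: "lin a" by (rule ef(3))
  have ker0: "\<And>v. a v = 0 \<Longrightarrow> v = 0" and ker1: "\<And>v. a v = v \<Longrightarrow> v = 0"
    using strict_ker[OF vn aM st] by blast+
  have i: "range_proj M (op_sub id a) = id"
  proof
    fix x
    have "supp_proj M a x = 0" using st unfolding strict_def op_zero_def by simp
    then show "range_proj M (op_sub id a) x = id x" unfolding supp_proj_def op_sub_apply by simp
  qed
  have ii: "is_proj b" if bM: "b \<in> M" and eb: "effect b" and ac: "abs_compatible a b" and comm: "a \<circ> b = b \<circ> a" for b
  proof -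
    have bb: "bounded_op b" using vn bM by (rule vn_bounded)
    note efb = effect_facts[OF eb bb]
    have bl: "lin b" by (rule efb(3))
    have ba: "b (a y) = a (b y)" for y using comp_apply_eq[OF comm] by simp
    define u where "u = op_sub a b"
    define w where "w = op_sub (op_sub id a) b"
    have ub: "bounded_op u" unfolding u_def by (rule bounded_sub[OF ab bb])
    have wb: "bounded_op w" unfolding w_def by (rule bounded_sub[OF bounded_sub[OF bounded_id ab] bb])
    have us: "cinner (u x) y = cinner x (u y)" for x y unfolding u_def by (rule sym_sub[OF ef(4) efb(4)])
    have ws: "cinner (w x) y = cinner x (w y)" for x y unfolding w_def
      by (rule sym_sub[OF sym_sub efb(4)]) (simp_all add: ef(4))
    define P where "P = abs_op u"
    define Q where "Q = abs_op w"
    have Ps: "bounded_op P" "P \<circ> P = u \<circ> u" using abs_op_spec[OF ub us] unfolding P_def by blast+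
    have Qs: "Q \<circ> Q = w \<circ> w" using abs_op_spec[OF wb ws] unfolding Q_def by blast
    have PQ: "P x + Q x = x" for x using ac unfolding abs_compatible_def P_def Q_def u_def w_def
      by (metis op_add_apply id_apply)
    have Pl: "lin P" using Ps(1) by (rule bounded_lin)
    have ua: "u y = a y - b y" for y unfolding u_def op_sub_apply ..
    have wa: "w y = y - a y - b y" for y unfolding w_def op_sub_apply by simp
    define p where "p y = a y + b y - a (b y) - a (b y)" for y
    have PP: "P (P x) = u (u x)" for x using Ps(2) by (metis comp_apply)
    have QQ: "Q (Q x) = w (w x)" for x using Qs by (metis comp_apply)
    have Pp: "P x = p x" for x
    proof -
      have Qx: "Q y = y - P y" for y using PQ[of y] by (simp add: algebra_simps)
      have "w (w x) = x - P x - (P x - u (u x))"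
        using QQ[of x] unfolding Qx lin_diff[OF Pl] PP by simp
      then have "P x + P x = x + u (u x) - w (w x)" by (simp add: algebra_simps)
      also have "\<dots> = p x + p x" unfolding ua wa p_def
        by (simp add: lin_diff[OF al] lin_diff[OF bl] lin_add[OF al] lin_add[OF bl] ba algebra_simps)
      finally show ?thesis by (rule double_cancel)
    qed
    have bbx: "b (b x) = b x" for x
    proof -
      define Z where "Z = a (b x) - a (a (b x)) - a (b (b x)) + a (a (b (b x)))"
      have "p (p x) - u (u x) = Z + Z + Z + Z" unfolding p_def Z_def ua
        by (simp add: lin_diff[OF al] lin_diff[OF bl] lin_add[OF al] lin_add[OF bl] ba algebra_simps)
      moreover have "p (p x) = u (u x)" using PP[of x] Pp by simp
      ultimately have "(Z + Z) + (Z + Z) = 0 + 0" by (simp add: add.assoc)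
      then have "Z + Z = 0" by (rule double_cancel)
      then have "Z + Z = 0 + 0" by simp
      then have Z0: "Z = 0" by (rule double_cancel)
      define t where "t = b x - b (b x)"
      have "Z = a (t - a t)" unfolding Z_def t_def by (simp add: lin_diff[OF al] lin_add[OF al] algebra_simps)
      then have "a (t - a t) = 0" using Z0 by simp
      then have "t - a t = 0" by (rule ker0)
      then have "t = 0" using ker1[of t] by simp
      then show ?thesis unfolding t_def by simp
    qed
    show ?thesis unfolding is_proj_def
    proof
      show "b \<circ> b = b" using bbx by (simp add: fun_eq_iff)
      show "adj b = b" by (rule adj_self[OF efb(4)])
    qed
  qed
  have iii: "a \<circ> b \<noteq> b \<circ> a" if bM: "b \<in> M" and eb: "effect b" and sb: "strict M b" and ac: "abs_compatible a b" for b
  proof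
    assume comm: "a \<circ> b = b \<circ> a"
    have pb: "is_proj b" using ii[OF bM eb ac comm] .
    have "b v = 0" for v
    proof -
      have "b (b v) = b v" using pb unfolding is_proj_def by (metis comp_apply)
      then show ?thesis using strict_ker(2)[OF vn bM sb, of "b v"] by simp
    qed
    then have "b = op_zero" unfolding op_zero_def by (simp add: fun_eq_iff)
    then show False using sb unfolding strict_def by blast
  qed
  have iv: "x = op_zero" if xM: "x \<in> M" and h: "adj x \<circ> (a \<circ> a) \<circ> x = adj x \<circ> x" for x
  proof -
    have xb: "bounded_op x" using vn xM by (rule vn_bounded)
    have "x v = 0" for v
    proof -
      define z where "z = x v"
      have "cinner z (a (a z)) = cinner v (adj x (a (a (x v))))" unfolding z_def by (rule adj_spec[OF xb])
      also have "adj x (a (a (x v))) = adj x (x v)" using h by (metis comp_apply)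
      also have "cinner v (adj x (x v)) = cinner z z" unfolding z_def by (rule adj_spec[OF xb, symmetric])
      finally have e: "cinner z (a (a z)) = cinner z z" .
      have "cinner (a z) (a z) = cinner z z" using e by (simp add: ef(4))
      moreover have "Re (cinner (a z) (a z)) \<le> Re (cinner z (a z))"
      proof (rule sq_le[OF al ef(1)])
        fix y show "Re (cinner y (a y)) \<le> Re (cinner y y)"
          using pos_Re[OF ef(2), of y] by (simp add: op_sub_apply cinner_diff_right)
      qed
      moreover have "Re (cinner z (a z)) \<le> Re (cinner z z)"
        using pos_Re[OF ef(2), of z] by (simp add: op_sub_apply cinner_diff_right)
      ultimately have "Re (cinner z (op_sub id a z)) = 0" by (simp add: op_sub_apply cinner_diff_right)
      moreover have "lin (op_sub id a)" using bounded_sub[OF bounded_id ab] by (rule bounded_lin)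
      ultimately have "op_sub id a z = 0" using pos_zero ef(2) by blast
      then have "a z = z" by (simp add: op_sub_apply)
      then show "x v = 0" using ker1 unfolding z_def by blast
    qed
    then show ?thesis unfolding op_zero_def by (simp add: fun_eq_iff)
  qed
  show ?thesis using i ii iii iv by blast
qed

end
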